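(* Let $\mathbf{F}$ be a finite field with $q$ elements, $0\le r\le n$, and $V_j=\operatorname{span}(b_1,\dots,b_j)\subseteq\mathbf{F}^n$ for the standard basis. Let $T_r\colon V_r\to V_n$ be a semi-idempotent partial linear map with domain $V_r$. For $0\le\ell\le n-r$ and $0\le j\le r$ define \[ h_\ell(j,T_r)=q^{\ell j}\sum_{\substack{S\colon V_{n-\ell}\to V_{n-\ell}\ \text{semi-idempotent}\\ \operatorname{rank}S\le j,\ S|_{V_r}=T_r}}\mu(\mathrm{srk}\,S)\binom{n-\ell-\operatorname{rank}S}{j-\operatorname{rank}S}_q . \] Then $h_\ell(j,T_r)$ does not depend on $\ell$.
   Context: A partial linear map on $V$ is a linear map from a subspace of $V$ to $V$; composition $T\circ S$ has domain $S^{-1}(\operatorname{dom}T)$. A partial linear map $T$ is semi-idempotent if for some $N$ it acts as the identity on $\operatorname{im}T^N$; for an operator $S\colon V\to V$ this means $V=X\oplus Y$ with $X,Y$ $S$-stable, $S|_X=\mathrm{id}$, $S|_Y$ nilpotent. The condition $S|_{V_r}=T_r$ means $S(v)=T_r(v)$ for $v\in V_r$ (so it forces $\operatorname{im}T_r\subseteq V_{n-\ell}$). $\mathrm{srk}\,S$ is the rank of $S^i$ for $i\gg0$. $\mu(i)=(-1)^iq^{\binom i2}$; $\binom ab_q$ is the $q$-binomial coefficient. *)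

theory Defs
  imports Complex_Main "HOL-Library.Function_Algebras" "HOL-Library.FuncSet"
begin

text \<open>Ambient vectors: functions nat => F. The coordinate space F^n is V n,
  and V j = span(b_1,...,b_j) (0-based coordinates 0..j-1).\<close>

definition V :: "nat \<Rightarrow> (nat \<Rightarrow> 'a::zero) set" where
  "V j = {v. \<forall>i\<ge>j. v i = 0}"

definition scl :: "'a::field \<Rightarrow> (nat \<Rightarrow> 'a) \<Rightarrow> (nat \<Rightarrow> 'a)" where
  "scl c v = (\<lambda>i. c * v i)"

definition lin_on :: "(nat \<Rightarrow> 'a::field) set \<Rightarrow> ((nat \<Rightarrow> 'a) \<Rightarrow> (nat \<Rightarrow> 'a)) \<Rightarrow> bool" where
  "lin_on D T \<longleftrightarrow> (\<forall>u\<in>D. \<forall>v\<in>D. T (u + v) = T u + T v) \<and> (\<forall>c. \<forall>v\<in>D. T (scl c v) = scl c (T v))"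

text \<open>Powers of a partial map T with domain D on ambient space A:
  T^0 is the identity of A (domain A); dom T^(k+1) = (T^k)^{-1}(D).\<close>
fun pdom :: "(nat \<Rightarrow> 'a) set \<Rightarrow> (nat \<Rightarrow> 'a) set \<Rightarrow> ((nat \<Rightarrow> 'a) \<Rightarrow> (nat \<Rightarrow> 'a)) \<Rightarrow> nat \<Rightarrow> (nat \<Rightarrow> 'a) set" where
  "pdom A D T 0 = A"
| "pdom A D T (Suc k) = {v \<in> pdom A D T k. (T ^^ k) v \<in> D}"

definition semi_idem :: "(nat \<Rightarrow> 'a) set \<Rightarrow> (nat \<Rightarrow> 'a) set \<Rightarrow> ((nat \<Rightarrow> 'a) \<Rightarrow> (nat \<Rightarrow> 'a)) \<Rightarrow> bool" where
  "semi_idem A D T \<longleftrightarrow> (\<exists>N. \<forall>w \<in> (T ^^ N) ` pdom A D T N. w \<in> D \<and> T w = w)"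

definition rk :: "(nat \<Rightarrow> 'a::field) set \<Rightarrow> ((nat \<Rightarrow> 'a) \<Rightarrow> (nat \<Rightarrow> 'a)) \<Rightarrow> nat" where
  "rk D S = Vector_Spaces.vector_space.dim scl (S ` D)"

definition srk :: "(nat \<Rightarrow> 'a::field) set \<Rightarrow> ((nat \<Rightarrow> 'a) \<Rightarrow> (nat \<Rightarrow> 'a)) \<Rightarrow> nat" where
  "srk D S = (THE r. \<exists>N. \<forall>i\<ge>N. rk D (S ^^ i) = r)"

definition mu :: "int \<Rightarrow> nat \<Rightarrow> int" where
  "mu q i = (-1) ^ i * q ^ (i choose 2)"

fun qbinom :: "int \<Rightarrow> nat \<Rightarrow> nat \<Rightarrow> int" where
  "qbinom q a 0 = 1"
| "qbinom q 0 (Suc b) = 0"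
| "qbinom q (Suc a) (Suc b) = qbinom q a b + q ^ Suc b * qbinom q a (Suc b)"

text \<open>Linear operators V_m -> V_m, each represented by its unique extensional function.\<close>
definition ops :: "nat \<Rightarrow> ((nat \<Rightarrow> 'a::field) \<Rightarrow> (nat \<Rightarrow> 'a)) set" where
  "ops m = {S. lin_on (V m) S \<and> S ` V m \<subseteq> V m \<and> S \<in> extensional (V m)}"

definition h :: "nat \<Rightarrow> nat \<Rightarrow> nat \<Rightarrow> nat \<Rightarrow> ((nat \<Rightarrow> 'a::{field,finite}) \<Rightarrow> (nat \<Rightarrow> 'a)) \<Rightarrow> int" where
  "h n r l j T = (let q = int (card (UNIV :: 'a set)); m = n - l in
     q ^ (l * j) * (\<Sum>S \<in> {S \<in> ops m. semi_idem (V m) (V m) S \<and> rk (V m) S \<le> j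
                              \<and> (\<forall>v \<in> V r. S v = T v)}.
        mu q (srk (V m) S) * qbinom q (m - rk (V m) S) (j - rk (V m) S)))"

end

theory Submission
  imports Defs
begin

lemma scl_vs: "vector_space (scl :: 'a::field \<Rightarrow> (nat \<Rightarrow> 'a) \<Rightarrow> (nat \<Rightarrow> 'a))"
  by unfold_locales (auto simp: scl_def fun_eq_iff algebra_simps)

interpretation vs: vector_space "scl :: 'a::field \<Rightarrow> (nat \<Rightarrow> 'a) \<Rightarrow> (nat \<Rightarrow> 'a)"
  by (rule scl_vs)

lemma scl_apply: "scl c v i = c * v i" by (simp add: scl_def)

lemma scl_one[simp]: "scl 1 v = v" by (simp add: scl_def)
lemma scl_zero[simp]: "scl 0 v = 0" by (simp add: scl_def fun_eq_iff)
lemma scl_zero_r[simp]: "scl c 0 = 0" by (simp add: scl_def fun_eq_iff)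

lemma subspD:
  assumes "vs.subspace E"
  shows "0 \<in> E" "\<And>x y. x \<in> E \<Longrightarrow> y \<in> E \<Longrightarrow> x + y \<in> E"
    "\<And>c x. x \<in> E \<Longrightarrow> scl c x \<in> E"
    "\<And>x y. x \<in> E \<Longrightarrow> y \<in> E \<Longrightarrow> x - y \<in> E"
    "\<And>x. x \<in> E \<Longrightarrow> - x \<in> E"
proof -
  show "0 \<in> E" using assms by (simp add: vs.subspace_def)
  show "\<And>x y. x \<in> E \<Longrightarrow> y \<in> E \<Longrightarrow> x + y \<in> E" using assms by (simp add: vs.subspace_def)
  show "\<And>c x. x \<in> E \<Longrightarrow> scl c x \<in> E" using assms by (simp add: vs.subspace_def)
  show "\<And>x y. x \<in> E \<Longrightarrow> y \<in> E \<Longrightarrow> x - y \<in> E" using assms by (rule vs.subspace_diff)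
  show "\<And>x. x \<in> E \<Longrightarrow> - x \<in> E" using assms by (rule vs.subspace_neg)
qed

definition ext1 :: "(nat \<Rightarrow> 'a::field) set \<Rightarrow> (nat \<Rightarrow> 'a) \<Rightarrow> (nat \<Rightarrow> 'a) set" where
  "ext1 W a = {x. \<exists>c. x - scl c a \<in> W}"

lemma ext1_mem: "w \<in> W \<Longrightarrow> w + scl c a \<in> ext1 W a"
  unfolding ext1_def by (intro CollectI exI[of _ c]) simp

lemma card_ext1:
  fixes W :: "(nat \<Rightarrow> 'a::{field,finite}) set"
  assumes fin: "finite W" and sub: "vs.subspace W" and a: "a \<notin> W"
  shows "card (ext1 W a) = card (UNIV::'a set) * card W"
proof -
  have bij: "bij_betw (\<lambda>(c,w). w + scl c a) ((UNIV::'a set) \<times> W) (ext1 W a)"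
  proof (rule bij_betwI')
    fix x y assume "x \<in> (UNIV::'a set) \<times> W" "y \<in> (UNIV::'a set) \<times> W"
    then obtain c w c' w' where x: "x = (c,w)" and y: "y = (c',w')" and w: "w \<in> W" "w' \<in> W"
      by auto
    show "((\<lambda>(c,w). w + scl c a) x = (\<lambda>(c,w). w + scl c a) y) = (x = y)"
    proof
      assume eq: "(\<lambda>(c,w). w + scl c a) x = (\<lambda>(c,w). w + scl c a) y"
      show "x = y"
      proof (cases "c = c'")
        case True
        then show ?thesis using eq x y by auto
      next
        case False
        have "scl (c - c') a = w' - w" using eq x y
          by (auto simp: fun_eq_iff algebra_simps)
        then have "scl (1/(c - c')) (scl (c - c') a) = scl (1/(c-c')) (w' - w)" by simp
        then have "a = scl (1/(c-c')) (w' - w)" using False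
          by (simp add: fun_eq_iff)
        moreover have "scl (1/(c-c')) (w' - w) \<in> W" using subspD[OF sub] w by auto
        ultimately show ?thesis using a by auto
      qed
    qed auto
  next
    fix x assume "x \<in> (UNIV::'a set) \<times> W"
    then show "(\<lambda>(c,w). w + scl c a) x \<in> ext1 W a"
      by (auto intro: ext1_mem)
  next
    fix y assume "y \<in> ext1 W a"
    then obtain c where "y - scl c a \<in> W" by (auto simp: ext1_def)
    then show "\<exists>x\<in>(UNIV::'a set) \<times> W. y = (\<lambda>(c,w). w + scl c a) x"
      by (intro bexI[of _ "(c, y - scl c a)"]) auto
  qed
  have "card (ext1 W a) = card ((UNIV::'a set) \<times> W)" using bij_betw_same_card[OF bij] by simp
  also have "\<dots> = card (UNIV::'a set) * card W" by (simp add: card_cartesian_product)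
  finally show ?thesis .
qed

lemma ext1_subspace:
  assumes sub: "vs.subspace W"
  shows "vs.subspace (ext1 W a)"
proof -
  have "ext1 W a = vs.span (insert a W)"
    using vs.span_insert[of a W] vs.span_eq_iff[THEN iffD2, OF sub] by (simp add: ext1_def)
  then show ?thesis by simp
qed


lemma ext1_same:
  assumes sub: "vs.subspace W" and "a \<in> W"
  shows "ext1 W a = W"
proof -
  have "ext1 W a = vs.span (insert a W)"
    using vs.span_insert[of a W] vs.span_eq_iff[THEN iffD2, OF sub] by (simp add: ext1_def)
  also have "\<dots> = W" using assms by (simp add: insert_absorb)
  finally show ?thesis .
qed

lemma finite_span:
  fixes B :: "(nat \<Rightarrow> 'a::{field,finite}) set"
  assumes "finite B"
  shows "finite (vs.span B)"
proof -
  have "vs.span B \<subseteq> (\<lambda>u. \<Sum>v\<in>B. scl (u v) v) ` (B \<rightarrow>\<^sub>E (UNIV::'a set))"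
  proof
    fix x assume "x \<in> vs.span B"
    then obtain u where x: "x = (\<Sum>v\<in>B. scl (u v) v)" using vs.span_finite[OF assms] by auto
    have "x = (\<Sum>v\<in>B. scl (restrict u B v) v)" unfolding x by (rule sum.cong) auto
    moreover have "restrict u B \<in> B \<rightarrow>\<^sub>E (UNIV::'a set)" by simp
    ultimately show "x \<in> (\<lambda>u. \<Sum>v\<in>B. scl (u v) v) ` (B \<rightarrow>\<^sub>E (UNIV::'a set))" by (rule image_eqI)
  qed
  moreover have "finite (B \<rightarrow>\<^sub>E (UNIV::'a set))" using assms by (simp add: finite_PiE)
  ultimately show ?thesis using finite_subset by blast
qed

lemma card_span_indep:
  fixes B :: "(nat \<Rightarrow> 'a::{field,finite}) set"
  assumes "finite B" "vs.independent B"
  shows "card (vs.span B) = card (UNIV::'a set) ^ card B"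
  using assms
proof (induction B rule: finite_induct)
  case empty
  then show ?case by (simp add: vs.span_empty)
next
  case (insert a B)
  have indB: "vs.independent B" and aB: "a \<notin> vs.span B"
    using insert.prems insert.hyps vs.independent_insert[of a B] by auto
  have finspan: "finite (vs.span B)" using insert.hyps by (simp add: finite_span)
  have "vs.span (insert a B) = ext1 (vs.span B) a"
    by (simp add: vs.span_insert ext1_def)
  then have "card (vs.span (insert a B)) = card (UNIV::'a set) * card (vs.span B)"
    using card_ext1[OF finspan vs.subspace_span aB] by simp
  then show ?case using insert indB by simp
qed

lemma card_dim:
  fixes E :: "(nat \<Rightarrow> 'a::{field,finite}) set"
  assumes fin: "finite E" and sub: "vs.subspace E"
  shows "card E = card (UNIV::'a set) ^ vs.dim E"
proof -
  obtain B where B: "B \<subseteq> E" "vs.independent B" "E \<subseteq> vs.span B" "card B = vs.dim E"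
    using vs.basis_exists by blast
  have "vs.span B = E"
    using B vs.span_minimal[OF B(1) sub] by auto
  moreover have "finite B" using B(1) fin finite_subset by auto
  ultimately show ?thesis using card_span_indep[of B] B by simp
qed

lemma q_ge2: "card (UNIV::'a::{field,finite} set) \<ge> 2"
proof -
  have "(0::'a) \<noteq> 1" by simp
  then have "card {0::'a, 1} = 2" by simp
  moreover have "card {0::'a,1} \<le> card (UNIV::'a set)" by (rule card_mono) auto
  ultimately show ?thesis by simp
qed

lemma dim_eqI:
  fixes E :: "(nat \<Rightarrow> 'a::{field,finite}) set"
  assumes "finite E" "vs.subspace E" "card E = card (UNIV::'a set) ^ n"
  shows "vs.dim E = n"
proof -
  have "card (UNIV::'a set) ^ vs.dim E = card (UNIV::'a set) ^ n" using card_dim[OF assms(1,2)] assms(3) by simp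
  then show ?thesis using q_ge2[where 'a='a] by (simp add: power_inject_exp)
qed

definition lfun :: "(nat \<Rightarrow> 'a::field) set \<Rightarrow> ((nat \<Rightarrow> 'a) \<Rightarrow> 'a) \<Rightarrow> bool" where
  "lfun E \<psi> \<longleftrightarrow> (\<forall>u\<in>E. \<forall>v\<in>E. \<psi> (u + v) = \<psi> u + \<psi> v) \<and> (\<forall>c. \<forall>v\<in>E. \<psi> (scl c v) = c * \<psi> v)"

definition opE :: "(nat \<Rightarrow> 'a::field) set \<Rightarrow> ((nat \<Rightarrow> 'a) \<Rightarrow> (nat \<Rightarrow> 'a)) \<Rightarrow> bool" where
  "opE E S \<longleftrightarrow> lin_on E S \<and> S ` E \<subseteq> E"

definition si :: "(nat \<Rightarrow> 'a) set \<Rightarrow> ((nat \<Rightarrow> 'a) \<Rightarrow> (nat \<Rightarrow> 'a)) \<Rightarrow> bool" where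
  "si E S \<longleftrightarrow> (\<exists>N. \<forall>w\<in>E. (S ^^ Suc N) w = (S ^^ N) w)"

definition Fix :: "(nat \<Rightarrow> 'a) set \<Rightarrow> ((nat \<Rightarrow> 'a) \<Rightarrow> (nat \<Rightarrow> 'a)) \<Rightarrow> (nat \<Rightarrow> 'a) set" where
  "Fix E S = {w\<in>E. S w = w}"

context
  fixes E :: "(nat \<Rightarrow> 'a::field) set" and f :: "(nat \<Rightarrow> 'a) \<Rightarrow> (nat \<Rightarrow> 'a)"
  assumes sub: "vs.subspace E" and lin: "lin_on E f"
begin

lemma lin_add: "u \<in> E \<Longrightarrow> v \<in> E \<Longrightarrow> f (u + v) = f u + f v"
  using lin by (simp add: lin_on_def)

lemma lin_scl: "v \<in> E \<Longrightarrow> f (scl c v) = scl c (f v)"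
  using lin by (simp add: lin_on_def)

lemma lin_zero: "f 0 = 0"
proof -
  have "f (scl 0 0) = scl 0 (f 0)" using lin_scl subspD(1)[OF sub] by blast
  then show ?thesis by simp
qed

lemma scl_m1: "scl (-1) v = - v" by (simp add: scl_def fun_eq_iff)

lemma lin_neg: "v \<in> E \<Longrightarrow> f (- v) = - f v"
  using lin_scl[of v "-1"] by (simp add: scl_m1)

lemma lin_diff: "u \<in> E \<Longrightarrow> v \<in> E \<Longrightarrow> f (u - v) = f u - f v"
  using lin_add[of u "- v"] lin_neg[of v] subspD[OF sub] by simp

lemma lin_sub_image: "vs.subspace (f ` E)"
  unfolding vs.subspace_def
proof (intro conjI ballI allI)
  show "0 \<in> f ` E" using lin_zero subspD(1)[OF sub] by (metis image_eqI)
next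
  fix x y assume "x \<in> f ` E" "y \<in> f ` E"
  then obtain a b where "a \<in> E" "b \<in> E" "x = f a" "y = f b" by auto
  then show "x + y \<in> f ` E" using lin_add subspD(2)[OF sub] by (metis image_eqI)
next
  fix c x assume "x \<in> f ` E"
  then obtain a where "a \<in> E" "x = f a" by auto
  then show "scl c x \<in> f ` E" using lin_scl subspD(3)[OF sub] by (metis image_eqI)
qed

lemma lin_sub_ker: "vs.subspace {w\<in>E. f w = 0}"
  unfolding vs.subspace_def
proof (intro conjI ballI allI)
  show "0 \<in> {w\<in>E. f w = 0}" using lin_zero subspD(1)[OF sub] by simp
next
  fix x y assume "x \<in> {w\<in>E. f w = 0}" "y \<in> {w\<in>E. f w = 0}"
  then show "x + y \<in> {w\<in>E. f w = 0}" using lin_add[of x y] subspD(2)[OF sub, of x y] by simp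
next
  fix c x assume "x \<in> {w\<in>E. f w = 0}"
  then show "scl c x \<in> {w\<in>E. f w = 0}" using lin_scl[of x c] subspD(3)[OF sub, of x c] by simp
qed

lemma rank_nullity_card:
  fixes E' :: "(nat \<Rightarrow> 'b::{field,finite}) set"
  assumes fin: "finite E"
  shows "card E = card {w\<in>E. f w = 0} * card (f ` E)"
proof -
  have "card E = (\<Sum>y\<in>f ` E. card {a\<in>E. f a = y})"
    unfolding card_eq_sum by (rule sum.image_gen[OF fin])
  also have "\<dots> = (\<Sum>y\<in>f ` E. card {w\<in>E. f w = 0})"
  proof (rule sum.cong[OF refl])
    fix y assume "y \<in> f ` E"
    then obtain x0 where x0: "x0 \<in> E" "y = f x0" by auto
    have "bij_betw (\<lambda>w. w - x0) {a\<in>E. f a = y} {w\<in>E. f w = 0}"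
    proof (rule bij_betwI[where g = "\<lambda>w. w + x0"])
      show "(\<lambda>w. w - x0) \<in> {a \<in> E. f a = y} \<rightarrow> {w \<in> E. f w = 0}"
      proof
        fix w assume "w \<in> {a \<in> E. f a = y}"
        then show "w - x0 \<in> {w \<in> E. f w = 0}" using x0 lin_diff[of w x0] subspD(4)[OF sub, of w x0] by simp
      qed
      show "(\<lambda>w. w + x0) \<in> {w \<in> E. f w = 0} \<rightarrow> {a \<in> E. f a = y}"
      proof
        fix w assume "w \<in> {a \<in> E. f a = 0}"
        then show "w + x0 \<in> {w \<in> E. f w = y}" using x0 lin_add[of w x0] subspD(2)[OF sub, of w x0] by simp
      qed
    qed simp_all
    then show "card {a\<in>E. f a = y} = card {w\<in>E. f w = 0}" by (rule bij_betw_same_card)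
  qed
  also have "\<dots> = card {w\<in>E. f w = 0} * card (f ` E)" by simp
  finally show ?thesis .
qed

end

lemma lfun_zero: "vs.subspace E \<Longrightarrow> lfun E \<psi> \<Longrightarrow> \<psi> 0 = 0"
proof -
  assume sub: "vs.subspace E" and l: "lfun E \<psi>"
  have "\<psi> (scl 0 0) = 0 * \<psi> 0" using l subspD(1)[OF sub] unfolding lfun_def by blast
  then show ?thesis by simp
qed

lemma lfun_diff: "vs.subspace E \<Longrightarrow> lfun E \<psi> \<Longrightarrow> u \<in> E \<Longrightarrow> v \<in> E \<Longrightarrow> \<psi> (u - v) = \<psi> u - \<psi> v"
proof -
  assume sub: "vs.subspace E" and l: "lfun E \<psi>" and u: "u \<in> E" and v: "v \<in> E"
  have "\<psi> (scl (-1) v) = (-1) * \<psi> v" using l v unfolding lfun_def by blast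
  then have "\<psi> (scl (-1) v) = - \<psi> v" by simp
  then have "\<psi> (- v) = - \<psi> v" by (simp add: scl_m1)
  moreover have "- v \<in> E" using subspD(5)[OF sub v] .
  then have "\<psi> (u + - v) = \<psi> u + \<psi> (- v)" using l u unfolding lfun_def by blast
  ultimately show ?thesis by simp
qed

lemma lfun_add: "lfun E \<psi> \<Longrightarrow> u \<in> E \<Longrightarrow> v \<in> E \<Longrightarrow> \<psi> (u + v) = \<psi> u + \<psi> v"
  unfolding lfun_def by simp

lemma lfun_scl: "lfun E \<psi> \<Longrightarrow> v \<in> E \<Longrightarrow> \<psi> (scl c v) = c * \<psi> v"
  unfolding lfun_def by simp

lemma funpow_in:
  assumes "S ` E \<subseteq> E" "w \<in> E"
  shows "(S ^^ n) w \<in> E"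
  using assms by (induction n) auto

lemma funpow_cong:
  assumes "S ` E \<subseteq> E" "\<And>w. w \<in> E \<Longrightarrow> S w = S' w" "w \<in> E"
  shows "(S ^^ n) w = (S' ^^ n) w"
  using assms
proof (induction n)
  case 0 then show ?case by simp
next
  case (Suc n)
  have "(S ^^ n) w \<in> E" using funpow_in[OF Suc.prems(1,3)] .
  then show ?case using Suc by simp
qed

lemma si_cong:
  assumes "S ` E \<subseteq> E" "\<And>w. w \<in> E \<Longrightarrow> S w = S' w"
  shows "si E S \<longleftrightarrow> si E S'"
proof -
  have eq: "\<And>N w. w \<in> E \<Longrightarrow> (S ^^ N) w = (S' ^^ N) w"
    using funpow_cong[OF assms] by blast
  have "(\<forall>w\<in>E. (S ^^ Suc N) w = (S ^^ N) w) = (\<forall>w\<in>E. (S' ^^ Suc N) w = (S' ^^ N) w)" for N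
    using eq[of _ N] eq[of _ "Suc N"] by auto
  then show ?thesis unfolding si_def by simp
qed

lemma Fix_cong:
  assumes "\<And>w. w \<in> E \<Longrightarrow> S w = S' w"
  shows "Fix E S = Fix E S'"
  using assms by (auto simp: Fix_def)

lemma si_ge:
  assumes N: "\<forall>w\<in>E. (S ^^ Suc N) w = (S ^^ N) w" and SE: "S ` E \<subseteq> E" and "N \<le> M" "w \<in> E"
  shows "(S ^^ Suc M) w = (S ^^ M) w"
proof -
  define d where "d = M - N"
  have M: "M = d + N" using \<open>N \<le> M\<close> unfolding d_def by simp
  have e1: "(S ^^ Suc N) w = (S ^^ N) w" using N \<open>w \<in> E\<close> by blast
  have "(S ^^ Suc M) w = (S ^^ (d + Suc N)) w" unfolding M by simp
  also have "\<dots> = (S ^^ d) ((S ^^ Suc N) w)" by (simp only: funpow_add comp_apply)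
  also have "\<dots> = (S ^^ d) ((S ^^ N) w)" by (simp only: e1)
  also have "\<dots> = (S ^^ (d + N)) w" by (simp only: funpow_add comp_apply)
  also have "\<dots> = (S ^^ M) w" unfolding M ..
  finally show ?thesis .
qed

lemma si_image_Fix:
  assumes N: "\<forall>w\<in>E. (S ^^ Suc N) w = (S ^^ N) w" and SE: "S ` E \<subseteq> E" and "N \<le> M"
  shows "(S ^^ M) ` E = Fix E S"
proof
  show "(S ^^ M) ` E \<subseteq> Fix E S"
  proof
    fix x assume "x \<in> (S ^^ M) ` E"
    then obtain w where w: "w \<in> E" "x = (S ^^ M) w" by auto
    have "S x = (S ^^ Suc M) w" using w by simp
    also have "\<dots> = x" using si_ge[OF N SE \<open>N \<le> M\<close> w(1)] w by simp
    finally show "x \<in> Fix E S" using funpow_in[OF SE w(1)] w by (simp add: Fix_def)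
  qed
next
  show "Fix E S \<subseteq> (S ^^ M) ` E"
  proof
    fix x assume x: "x \<in> Fix E S"
    have "S x = x" "x \<in> E" using x by (auto simp: Fix_def)
    then have "(S ^^ M) x = x" by (induction M) auto
    then show "x \<in> (S ^^ M) ` E" using \<open>x \<in> E\<close> by (rule image_eqI[OF sym])
  qed
qed

lemma opE_in: "opE E S \<Longrightarrow> w \<in> E \<Longrightarrow> S w \<in> E"
  unfolding opE_def by blast

lemma opE_lin: "opE E S \<Longrightarrow> lin_on E S"
  unfolding opE_def by blast

lemma opE_img: "opE E S \<Longrightarrow> S ` E \<subseteq> E"
  unfolding opE_def by blast

lemma Fix_sub:
  assumes sub: "vs.subspace E" and op: "opE E S"
  shows "vs.subspace (Fix E S)"
  unfolding vs.subspace_def Fix_def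
proof (intro conjI ballI allI)
  have lin: "lin_on E S" using op by (rule opE_lin)
  show "0 \<in> {w \<in> E. S w = w}" using lin_zero[OF sub lin] subspD(1)[OF sub] by simp
  fix x y assume "x \<in> {w \<in> E. S w = w}" "y \<in> {w \<in> E. S w = w}"
  then show "x + y \<in> {w \<in> E. S w = w}" using lin_add[OF sub lin, of x y] subspD(2)[OF sub, of x y] by simp
next
  have lin: "lin_on E S" using op by (rule opE_lin)
  fix c x assume "x \<in> {w \<in> E. S w = w}"
  then show "scl c x \<in> {w \<in> E. S w = w}" using lin_scl[OF sub lin, of x c] subspD(3)[OF sub, of x c] by simp
qed

lemma hyp_sub:
  assumes sub: "vs.subspace E" and l: "lfun E \<psi>"
  shows "vs.subspace {w\<in>E. \<psi> w = 0}"
  unfolding vs.subspace_def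
proof (intro conjI ballI allI)
  show "0 \<in> {w\<in>E. \<psi> w = 0}" using lfun_zero[OF sub l] subspD(1)[OF sub] by simp
  fix x y assume "x \<in> {w\<in>E. \<psi> w = 0}" "y \<in> {w\<in>E. \<psi> w = 0}"
  then show "x + y \<in> {w\<in>E. \<psi> w = 0}" using lfun_add[OF l, of x y] subspD(2)[OF sub, of x y] by simp
next
  fix c x assume "x \<in> {w\<in>E. \<psi> w = 0}"
  then show "scl c x \<in> {w\<in>E. \<psi> w = 0}" using lfun_scl[OF l, of x c] subspD(3)[OF sub, of x c] by simp
qed

lemma proj_in:
  assumes sub: "vs.subspace E" and l: "lfun E \<phi>" and y: "y \<in> E" "\<phi> y = 1" and w: "w \<in> E"
  shows "w - scl (\<phi> w) y \<in> E" "\<phi> (w - scl (\<phi> w) y) = 0"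
proof -
  show "w - scl (\<phi> w) y \<in> E" using subspD[OF sub] y w by blast
  have "\<phi> (w - scl (\<phi> w) y) = \<phi> w - \<phi> (scl (\<phi> w) y)"
    using lfun_diff[OF sub l w] subspD(3)[OF sub y(1)] by blast
  also have "\<dots> = 0" using lfun_scl[OF l y(1)] y(2) by simp
  finally show "\<phi> (w - scl (\<phi> w) y) = 0" .
qed

lemma compress:
  fixes E :: "(nat \<Rightarrow> 'a::field) set"
  assumes sub: "vs.subspace E" and l: "lfun E \<phi>" and y: "y \<in> E" "\<phi> y = 1"
    and op: "opE E S" and Sy: "S y = 0"
  defines "H \<equiv> {w\<in>E. \<phi> w = 0}" and "\<pi> \<equiv> (\<lambda>w. w - scl (\<phi> w) y)"
  shows "opE H (\<lambda>w. \<pi> (S w))" "si E S \<longleftrightarrow> si H (\<lambda>w. \<pi> (S w))"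
    "bij_betw \<pi> (Fix E S) (Fix H (\<lambda>w. \<pi> (S w)))"
proof -
  have lin: "lin_on E S" using op by (rule opE_lin)
  have SE: "\<And>w. w \<in> E \<Longrightarrow> S w \<in> E" using op by (rule opE_in)
  have HE: "H \<subseteq> E" unfolding H_def by auto
  have piH: "\<And>w. w \<in> E \<Longrightarrow> \<pi> w \<in> H"
    unfolding H_def \<pi>_def using proj_in[OF sub l y] by blast
  have piE: "\<And>w. w \<in> E \<Longrightarrow> \<pi> w \<in> E" using piH HE by blast
  have piid: "\<And>h. h \<in> H \<Longrightarrow> \<pi> h = h" unfolding H_def \<pi>_def by simp
  have Spi: "\<And>w. w \<in> E \<Longrightarrow> S (\<pi> w) = S w"
  proof -
    fix w assume w: "w \<in> E"
    have "S (\<pi> w) = S w - S (scl (\<phi> w) y)"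
      unfolding \<pi>_def using lin_diff[OF sub lin w] subspD(3)[OF sub y(1)] by blast
    also have "\<dots> = S w" using lin_scl[OF sub lin y(1)] Sy by simp
    finally show "S (\<pi> w) = S w" .
  qed
  have plin: "\<And>u w. u \<in> E \<Longrightarrow> w \<in> E \<Longrightarrow> \<pi> (u + w) = \<pi> u + \<pi> w"
    unfolding \<pi>_def using lfun_add[OF l] by (simp add: scl_def fun_eq_iff algebra_simps)
  have pscl: "\<And>c w. w \<in> E \<Longrightarrow> \<pi> (scl c w) = scl c (\<pi> w)"
    unfolding \<pi>_def using lfun_scl[OF l] by (simp add: scl_def fun_eq_iff algebra_simps)
  show op': "opE H (\<lambda>w. \<pi> (S w))"
    unfolding opE_def lin_on_def
  proof (intro conjI ballI allI)
    fix u w assume "u \<in> H" "w \<in> H"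
    then have "u \<in> E" "w \<in> E" using HE by auto
    then show "\<pi> (S (u + w)) = \<pi> (S u) + \<pi> (S w)"
      using lin_add[OF sub lin] plin SE by simp
  next
    fix c w assume "w \<in> H"
    then have "w \<in> E" using HE by auto
    then show "\<pi> (S (scl c w)) = scl c (\<pi> (S w))"
      using lin_scl[OF sub lin] pscl SE by simp
  next
    show "(\<lambda>w. \<pi> (S w)) ` H \<subseteq> H" using piH SE HE by blast
  qed
  let ?T = "\<lambda>w. \<pi> (S w)"
  have pow: "\<And>n h. h \<in> H \<Longrightarrow> (?T ^^ n) h = \<pi> ((S ^^ n) h)"
  proof -
    fix n h assume h: "h \<in> H"
    show "(?T ^^ n) h = \<pi> ((S ^^ n) h)"
    proof (induction n)
      case 0 then show ?case using piid h by simp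
    next
      case (Suc n)
      have "(S ^^ n) h \<in> E" using funpow_in[OF opE_img[OF op]] h HE by blast
      then show ?case using Suc Spi by simp
    qed
  qed
  show "si E S \<longleftrightarrow> si H ?T"
  proof
    assume "si E S"
    then obtain N where N: "\<forall>w\<in>E. (S ^^ Suc N) w = (S ^^ N) w" unfolding si_def by blast
    have "\<forall>h\<in>H. (?T ^^ Suc N) h = (?T ^^ N) h"
    proof
      fix h assume h: "h \<in> H"
      have "(?T ^^ Suc N) h = \<pi> ((S ^^ Suc N) h)" using pow[OF h] by blast
      also have "\<dots> = \<pi> ((S ^^ N) h)" using N h HE by auto
      also have "\<dots> = (?T ^^ N) h" using pow[OF h] by simp
      finally show "(?T ^^ Suc N) h = (?T ^^ N) h" .
    qed
    then show "si H ?T" unfolding si_def by blast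
  next
    assume "si H ?T"
    then obtain N where N: "\<forall>h\<in>H. (?T ^^ Suc N) h = (?T ^^ N) h" unfolding si_def by blast
    have "\<forall>w\<in>E. (S ^^ Suc (Suc N)) w = (S ^^ Suc N) w"
    proof
      fix w assume w: "w \<in> E"
      define h where "h = \<pi> w"
      have h: "h \<in> H" unfolding h_def using piH w by blast
      have hE: "h \<in> E" using h HE by blast
      have k1: "\<And>k. (S ^^ Suc k) w = (S ^^ Suc k) h"
      proof -
        fix k
        have "(S ^^ Suc k) w = (S ^^ k) (S w)" by (simp only: funpow_Suc_right comp_apply)
        also have "\<dots> = (S ^^ k) (S h)" unfolding h_def using Spi[OF w] by simp
        also have "\<dots> = (S ^^ Suc k) h" by (simp only: funpow_Suc_right comp_apply)
        finally show "(S ^^ Suc k) w = (S ^^ Suc k) h" .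
      qed
      have a: "\<pi> ((S ^^ Suc N) h) = \<pi> ((S ^^ N) h)"
      proof -
        have "\<pi> ((S ^^ Suc N) h) = (?T ^^ Suc N) h" using pow[OF h, of "Suc N"] by simp
        also have "\<dots> = (?T ^^ N) h" using N h by blast
        also have "\<dots> = \<pi> ((S ^^ N) h)" using pow[OF h, of N] by simp
        finally show ?thesis .
      qed
      have b1: "(S ^^ Suc N) h \<in> E" "(S ^^ N) h \<in> E"
        using funpow_in[OF opE_img[OF op] hE] by blast+
      have "(S ^^ Suc (Suc N)) h = S ((S ^^ Suc N) h)" by simp
      also have "\<dots> = S (\<pi> ((S ^^ Suc N) h))" using Spi b1 by simp
      also have "\<dots> = S (\<pi> ((S ^^ N) h))" using a by simp
      also have "\<dots> = S ((S ^^ N) h)" using Spi b1 by simp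
      also have "\<dots> = (S ^^ Suc N) h" by simp
      finally show "(S ^^ Suc (Suc N)) w = (S ^^ Suc N) w" using k1 by simp
    qed
    then show "si E S" unfolding si_def by blast
  qed
  show "bij_betw \<pi> (Fix E S) (Fix H ?T)"
  proof (rule bij_betwI[where g = S])
    show "\<pi> \<in> Fix E S \<rightarrow> Fix H ?T"
    proof
      fix f assume "f \<in> Fix E S"
      then have f: "f \<in> E" "S f = f" by (auto simp: Fix_def)
      then show "\<pi> f \<in> Fix H ?T" using piH Spi by (simp add: Fix_def)
    qed
    show "S \<in> Fix H ?T \<rightarrow> Fix E S"
    proof
      fix h assume "h \<in> Fix H ?T"
      then have h: "h \<in> H" "\<pi> (S h) = h" by (auto simp: Fix_def)
      have hE: "h \<in> E" using h HE by blast
      have "S (S h) = S (\<pi> (S h))" using Spi SE hE by simp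
      also have "\<dots> = S h" using h by simp
      finally show "S h \<in> Fix E S" using SE hE by (simp add: Fix_def)
    qed
    fix x assume "x \<in> Fix E S"
    then show "S (\<pi> x) = x" using Spi by (auto simp: Fix_def)
  next
    fix h assume "h \<in> Fix H ?T"
    then show "\<pi> (S h) = h" by (auto simp: Fix_def)
  qed
qed

definition fam :: "((nat \<Rightarrow> 'a::field) \<Rightarrow> 'a) \<Rightarrow> (nat \<Rightarrow> 'a) \<Rightarrow> ((nat \<Rightarrow> 'a) \<Rightarrow> (nat \<Rightarrow> 'a)) \<Rightarrow> (nat \<Rightarrow> 'a) \<Rightarrow> (nat \<Rightarrow> 'a) \<Rightarrow> (nat \<Rightarrow> 'a)" where
  "fam \<psi> e P v = (\<lambda>w. P (w - scl (\<psi> w) e) + scl (\<psi> w) v)"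

definition setting :: "(nat \<Rightarrow> 'a::field) set \<Rightarrow> ((nat \<Rightarrow> 'a) \<Rightarrow> 'a) \<Rightarrow> (nat \<Rightarrow> 'a) \<Rightarrow> bool" where
  "setting E \<psi> e \<longleftrightarrow> finite E \<and> vs.subspace E \<and> lfun E \<psi> \<and> e \<in> E \<and> \<psi> e = 1"

definition Gw :: "(nat \<Rightarrow> 'a::{field,finite}) set \<Rightarrow> ((nat \<Rightarrow> 'a) \<Rightarrow> (nat \<Rightarrow> 'a)) \<Rightarrow> int" where
  "Gw E S = (if si E S then mu (int (card (UNIV::'a set))) (vs.dim (Fix E S)) else 0)"

lemma settingD:
  assumes "setting E \<psi> e"
  shows "finite E" "vs.subspace E" "lfun E \<psi>" "e \<in> E" "\<psi> e = 1"
  using assms by (auto simp: setting_def)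

lemma K_sub: "setting E \<psi> e \<Longrightarrow> vs.subspace {w\<in>E. \<psi> w = 0}"
  using hyp_sub settingD by blast

lemma fam_K: "\<psi> k = 0 \<Longrightarrow> fam \<psi> e P v k = P k"
  by (simp add: fam_def)

lemma fam_decomp:
  assumes "setting E \<psi> e" "w \<in> E"
  shows "w - scl (\<psi> w) e \<in> {w\<in>E. \<psi> w = 0}"
  using proj_in[OF settingD(2,3,4,5)[OF assms(1)] assms(2)] by blast

lemma fam_e:
  assumes st: "setting E \<psi> e" and P: "lin_on {w\<in>E. \<psi> w = 0} P"
  shows "fam \<psi> e P v e = v"
proof -
  have "P 0 = 0" using lin_zero[OF K_sub[OF st] P] .
  then show ?thesis using settingD[OF st] by (simp add: fam_def)
qed

lemma fam_op:
  assumes st: "setting E \<psi> e" and P: "lin_on {w\<in>E. \<psi> w = 0} P" and PK: "P ` {w\<in>E. \<psi> w = 0} \<subseteq> E"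
    and v: "v \<in> E"
  shows "opE E (fam \<psi> e P v)"
proof -
  note sd = settingD[OF st]
  let ?K = "{w\<in>E. \<psi> w = 0}"
  have Ksub: "vs.subspace ?K" by (rule K_sub[OF st])
  have dec: "\<And>w. w \<in> E \<Longrightarrow> w - scl (\<psi> w) e \<in> ?K" using fam_decomp[OF st] by blast
  show ?thesis unfolding opE_def lin_on_def
  proof (intro conjI ballI allI)
    fix u w assume u: "u \<in> E" and w: "w \<in> E"
    have "u + w - scl (\<psi> (u + w)) e = (u - scl (\<psi> u) e) + (w - scl (\<psi> w) e)"
      using lfun_add[OF sd(3) u w] by (simp add: scl_def fun_eq_iff algebra_simps)
    then have "P (u + w - scl (\<psi> (u + w)) e) = P (u - scl (\<psi> u) e) + P (w - scl (\<psi> w) e)"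
      using lin_add[OF Ksub P dec[OF u] dec[OF w]] by (simp only:)
    then show "fam \<psi> e P v (u + w) = fam \<psi> e P v u + fam \<psi> e P v w"
      unfolding fam_def using lfun_add[OF sd(3) u w] by (simp add: scl_def fun_eq_iff algebra_simps)
  next
    fix c w assume w: "w \<in> E"
    have "scl c w - scl (\<psi> (scl c w)) e = scl c (w - scl (\<psi> w) e)"
      using lfun_scl[OF sd(3) w] by (simp add: scl_def fun_eq_iff algebra_simps)
    then have "P (scl c w - scl (\<psi> (scl c w)) e) = scl c (P (w - scl (\<psi> w) e))"
      using lin_scl[OF Ksub P dec[OF w]] by (simp only:)
    then show "fam \<psi> e P v (scl c w) = scl c (fam \<psi> e P v w)"
      unfolding fam_def using lfun_scl[OF sd(3) w] by (simp add: scl_def fun_eq_iff algebra_simps)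
  next
    show "fam \<psi> e P v ` E \<subseteq> E"
    proof
      fix x assume "x \<in> fam \<psi> e P v ` E"
      then obtain w where w: "w \<in> E" "x = fam \<psi> e P v w" by auto
      have "P (w - scl (\<psi> w) e) \<in> E" using PK dec[OF w(1)] by blast
      then show "x \<in> E" unfolding w fam_def using subspD[OF sd(2)] v by blast
    qed
  qed
qed

lemma fam_image:
  assumes st: "setting E \<psi> e" and P: "lin_on {w\<in>E. \<psi> w = 0} P"
  shows "fam \<psi> e P v ` E = ext1 (P ` {w\<in>E. \<psi> w = 0}) v"
proof
  note sd = settingD[OF st]
  show "fam \<psi> e P v ` E \<subseteq> ext1 (P ` {w\<in>E. \<psi> w = 0}) v"
  proof
    fix x assume "x \<in> fam \<psi> e P v ` E"
    then obtain w where w: "w \<in> E" "x = fam \<psi> e P v w" by auto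
    have "x - scl (\<psi> w) v = P (w - scl (\<psi> w) e)" unfolding w fam_def by simp
    then show "x \<in> ext1 (P ` {w\<in>E. \<psi> w = 0}) v"
      unfolding ext1_def using fam_decomp[OF st w(1)] by blast
  qed
next
  note sd = settingD[OF st]
  show "ext1 (P ` {w\<in>E. \<psi> w = 0}) v \<subseteq> fam \<psi> e P v ` E"
  proof
    fix x assume "x \<in> ext1 (P ` {w\<in>E. \<psi> w = 0}) v"
    then obtain c k where k: "k \<in> E" "\<psi> k = 0" "x - scl c v = P k" unfolding ext1_def by blast
    have wE: "k + scl c e \<in> E" using subspD[OF sd(2)] k sd(4) by blast
    have pw: "\<psi> (k + scl c e) = c"
      using lfun_add[OF sd(3) k(1)] lfun_scl[OF sd(3) sd(4)] subspD(3)[OF sd(2) sd(4)] k(2) sd(5) by simp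
    have "fam \<psi> e P v (k + scl c e) = P k + scl c v" unfolding fam_def pw by simp
    also have "\<dots> = x" using k(3) by (simp add: algebra_simps)
    finally show "x \<in> fam \<psi> e P v ` E" using wE by (metis image_eqI)
  qed
qed

lemma sum_decomp:
  fixes E :: "(nat \<Rightarrow> 'a::{field,finite}) set"
  assumes sub: "vs.subspace E" and l: "lfun E \<phi>" and z: "z \<in> E" "\<phi> z = 1" and fin: "finite E"
  shows "(\<Sum>v\<in>E. g v) = (\<Sum>h\<in>{w\<in>E. \<phi> w = 0}. \<Sum>c\<in>(UNIV::'a set). g (h + scl c z))"
proof -
  let ?H = "{w\<in>E. \<phi> w = 0}"
  have bij: "bij_betw (\<lambda>(h,c). h + scl c z) (?H \<times> (UNIV::'a set)) E"
  proof (rule bij_betwI[where g = "\<lambda>v. (v - scl (\<phi> v) z, \<phi> v)"])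
    show "(\<lambda>(h, c). h + scl c z) \<in> ?H \<times> UNIV \<rightarrow> E"
      using subspD[OF sub] z by auto
    show "(\<lambda>v. (v - scl (\<phi> v) z, \<phi> v)) \<in> E \<rightarrow> ?H \<times> UNIV"
    proof
      fix v assume "v \<in> E"
      then have "v - scl (\<phi> v) z \<in> ?H" using proj_in[OF sub l z] by blast
      then show "(v - scl (\<phi> v) z, \<phi> v) \<in> ?H \<times> UNIV" by blast
    qed
  next
    fix x assume "x \<in> ?H \<times> (UNIV::'a set)"
    then obtain h c where x: "x = (h,c)" "h \<in> E" "\<phi> h = 0" by auto
    have "\<phi> (h + scl c z) = c"
      using lfun_add[OF l x(2)] lfun_scl[OF l z(1)] subspD(3)[OF sub z(1)] x(3) z(2) by simp
    then show "(\<lambda>v. (v - scl (\<phi> v) z, \<phi> v)) ((\<lambda>(h, c). h + scl c z) x) = x"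
      using x by simp
  next
    fix v assume "v \<in> E"
    then show "(\<lambda>(h, c). h + scl c z) (v - scl (\<phi> v) z, \<phi> v) = v" by simp
  qed
  have "(\<Sum>v\<in>E. g v) = (\<Sum>x\<in>?H \<times> (UNIV::'a set). g ((\<lambda>(h,c). h + scl c z) x))"
    using sum.reindex_bij_betw[OF bij, of g] by simp
  also have "\<dots> = (\<Sum>h\<in>?H. \<Sum>c\<in>(UNIV::'a set). g (h + scl c z))"
    by (simp add: sum.cartesian_product split_def)
  finally show ?thesis .
qed

lemma Gw_cong:
  assumes "S ` E \<subseteq> E" "\<And>w. w \<in> E \<Longrightarrow> S w = S' w"
  shows "Gw E S = Gw E S'"
  unfolding Gw_def using si_cong[OF assms] Fix_cong[of E S S'] assms(2) by simp

lemma dim_card_eq: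
  fixes A B :: "(nat \<Rightarrow> 'a::{field,finite}) set"
  assumes "finite A" "vs.subspace A" "finite B" "vs.subspace B" "card A = card B"
  shows "vs.dim A = vs.dim B"
proof -
  have "card (UNIV::'a set) ^ vs.dim A = card (UNIV::'a set) ^ vs.dim B"
    using card_dim[OF assms(1,2)] card_dim[OF assms(3,4)] assms(5) by simp
  then show ?thesis using q_ge2[where 'a='a] by (simp add: power_inject_exp)
qed

lemma Gw_compress:
  fixes E :: "(nat \<Rightarrow> 'a::{field,finite}) set"
  assumes fin: "finite E" and sub: "vs.subspace E" and l: "lfun E \<phi>" and y: "y \<in> E" "\<phi> y = 1"
    and op: "opE E S" and Sy: "S y = 0"
  shows "Gw E S = Gw {w\<in>E. \<phi> w = 0} (\<lambda>w. (S w) - scl (\<phi> (S w)) y)"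
proof -
  let ?H = "{w\<in>E. \<phi> w = 0}" and ?T = "\<lambda>w. (S w) - scl (\<phi> (S w)) y"
  note c = compress[OF sub l y op Sy]
  have Hsub: "vs.subspace ?H" using hyp_sub[OF sub l] .
  have finH: "finite ?H" using fin by simp
  have "card (Fix E S) = card (Fix ?H ?T)" using bij_betw_same_card[OF c(3)] .
  moreover have "finite (Fix E S)" "finite (Fix ?H ?T)" using fin by (auto simp: Fix_def)
  moreover have "vs.subspace (Fix E S)" using Fix_sub[OF sub op] .
  moreover have "vs.subspace (Fix ?H ?T)" using Fix_sub[OF Hsub c(1)] .
  ultimately have "vs.dim (Fix E S) = vs.dim (Fix ?H ?T)" using dim_card_eq by blast
  then show ?thesis unfolding Gw_def using c(2) by simp
qed

context
  fixes E :: "(nat \<Rightarrow> 'a::{field,finite}) set" and \<psi> e P v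
  assumes st: "setting E \<psi> e" and opP: "opE {w\<in>E. \<psi> w = 0} P" and v: "v \<in> E"
begin

abbreviation "KK \<equiv> {w\<in>E. \<psi> w = 0}"
abbreviation "SS \<equiv> fam \<psi> e P v"

lemma A_fin: "finite E" and A_sub: "vs.subspace E" and A_l: "lfun E \<psi>" and A_e: "e \<in> E"
  and A_pe: "\<psi> e = 1"
  using settingD[OF st] by auto

lemma A_Ksub: "vs.subspace KK" using K_sub[OF st] .
lemma A_Plin: "lin_on KK P" using opE_lin[OF opP] .
lemma A_PK: "k \<in> KK \<Longrightarrow> P k \<in> KK" using opE_in[OF opP] .
lemma A_PKE: "P ` KK \<subseteq> E" using opE_img[OF opP] by blast
lemma A_opS: "opE E SS" using fam_op[OF st A_Plin A_PKE v] .
lemma A_SE: "w \<in> E \<Longrightarrow> SS w \<in> E" using opE_in[OF A_opS] .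

lemma A_psiS: "w \<in> E \<Longrightarrow> \<psi> (SS w) = \<psi> w * \<psi> v"
proof -
  assume w: "w \<in> E"
  have d: "w - scl (\<psi> w) e \<in> KK" using fam_decomp[OF st w] .
  then have "P (w - scl (\<psi> w) e) \<in> KK" by (rule A_PK)
  then have "\<psi> (P (w - scl (\<psi> w) e)) = 0" "P (w - scl (\<psi> w) e) \<in> E" by auto
  then show ?thesis unfolding fam_def
    using lfun_add[OF A_l _ subspD(3)[OF A_sub v]] lfun_scl[OF A_l v] by simp
qed

lemma A_SK: "k \<in> KK \<Longrightarrow> SS k = P k"
  by (rule fam_K) blast

lemma A_powK: "k \<in> KK \<Longrightarrow> (SS ^^ n) k = (P ^^ n) k"
proof -
  assume k: "k \<in> KK"
  have "(P ^^ n) k = (SS ^^ n) k"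
    by (rule funpow_cong[OF opE_img[OF opP] _ k]) (rule A_SK[symmetric])
  then show ?thesis by simp
qed

lemma A_si_K: "si E SS \<Longrightarrow> si KK P"
proof -
  assume "si E SS"
  then obtain N where N: "\<forall>w\<in>E. (SS ^^ Suc N) w = (SS ^^ N) w" unfolding si_def by blast
  have "\<forall>k\<in>KK. (P ^^ Suc N) k = (P ^^ N) k"
  proof
    fix k assume k: "k \<in> KK"
    then have kE: "k \<in> E" by simp
    have "(P ^^ Suc N) k = (SS ^^ Suc N) k" by (rule A_powK[OF k, symmetric])
    also have "\<dots> = (SS ^^ N) k" using N kE by blast
    also have "\<dots> = (P ^^ N) k" by (rule A_powK[OF k])
    finally show "(P ^^ Suc N) k = (P ^^ N) k" .
  qed
  then show "si KK P" unfolding si_def by blast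
qed

lemma A_psipow: "w \<in> E \<Longrightarrow> \<psi> ((SS ^^ n) w) = \<psi> w * \<psi> v ^ n"
proof (induction n)
  case 0 then show ?case by simp
next
  case (Suc n)
  have "(SS ^^ n) w \<in> E" using funpow_in[OF opE_img[OF A_opS] Suc.prems] .
  then show ?case using A_psiS Suc by simp
qed

lemma A_other: "\<psi> v \<noteq> 0 \<Longrightarrow> \<psi> v \<noteq> 1 \<Longrightarrow> \<not> si E SS"
proof
  assume c0: "\<psi> v \<noteq> 0" and c1: "\<psi> v \<noteq> 1" and "si E SS"
  then obtain N where N: "\<forall>w\<in>E. (SS ^^ Suc N) w = (SS ^^ N) w" unfolding si_def by blast
  then have "\<psi> ((SS ^^ Suc N) e) = \<psi> ((SS ^^ N) e)" using A_e by simp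
  moreover have "\<psi> ((SS ^^ Suc N) e) = \<psi> v ^ Suc N"
    using A_psipow[OF A_e, of "Suc N"] A_pe by (simp only: mult_1)
  moreover have "\<psi> ((SS ^^ N) e) = \<psi> v ^ N"
    using A_psipow[OF A_e, of "N"] A_pe by (simp only: mult_1)
  ultimately have "\<psi> v ^ Suc N = \<psi> v ^ N" by simp
  then have "\<psi> v ^ N * (\<psi> v - 1) = 0" by (simp add: algebra_simps)
  then show False using c0 c1 by simp
qed

lemma A_c0: assumes "\<psi> v = 0" "si KK P" shows "si E SS" "Fix E SS = Fix KK P"
proof -
  obtain N where N: "\<forall>k\<in>KK. (P ^^ Suc N) k = (P ^^ N) k" using assms(2) unfolding si_def by blast
  have SK: "\<And>w. w \<in> E \<Longrightarrow> SS w \<in> KK" using A_psiS A_SE assms(1) by simp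
  have "\<forall>w\<in>E. (SS ^^ Suc (Suc N)) w = (SS ^^ Suc N) w"
  proof
    fix w assume w: "w \<in> E"
    have "(SS ^^ Suc (Suc N)) w = (SS ^^ Suc N) (SS w)" by (simp only: funpow_Suc_right comp_apply)
    also have "\<dots> = (P ^^ Suc N) (SS w)" by (rule A_powK[OF SK[OF w]])
    also have "\<dots> = (P ^^ N) (SS w)" using N SK[OF w] by blast
    also have "\<dots> = (SS ^^ N) (SS w)" by (rule A_powK[OF SK[OF w], symmetric])
    also have "\<dots> = (SS ^^ Suc N) w" by (simp only: funpow_Suc_right comp_apply)
    finally show "(SS ^^ Suc (Suc N)) w = (SS ^^ Suc N) w" .
  qed
  then show "si E SS" unfolding si_def by blast
  show "Fix E SS = Fix KK P"
  proof
    show "Fix E SS \<subseteq> Fix KK P"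
    proof
      fix f assume "f \<in> Fix E SS"
      then have f: "f \<in> E" "SS f = f" by (auto simp: Fix_def)
      then have "f \<in> KK" using SK[OF f(1)] by simp
      then show "f \<in> Fix KK P" using f A_SK by (simp add: Fix_def)
    qed
    show "Fix KK P \<subseteq> Fix E SS" using A_SK by (auto simp: Fix_def)
  qed
qed

lemma A_c1_bad: assumes "\<psi> v = 1" "v - e \<notin> (\<lambda>k. k - P k) ` KK" shows "\<not> si E SS"
proof
  assume "si E SS"
  then obtain N where N: "\<forall>w\<in>E. (SS ^^ Suc N) w = (SS ^^ N) w" unfolding si_def by blast
  have "(SS ^^ N) ` E = Fix E SS" using si_image_Fix[OF N opE_img[OF A_opS] le_refl] .
  then have f: "(SS ^^ N) e \<in> Fix E SS" using A_e by blast
  define f where "f = (SS ^^ N) e"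
  have fE: "f \<in> E" "SS f = f" using f unfolding f_def Fix_def by auto
  have pf: "\<psi> f = 1" unfolding f_def using A_psipow[OF A_e, of N] A_pe assms(1) by (simp only: mult_1 power_one)
  define g where "g = f - e"
  have gK: "g \<in> KK" unfolding g_def using fE(1) A_e subspD(4)[OF A_sub] lfun_diff[OF A_sub A_l fE(1) A_e] pf A_pe by simp
  have "f - scl (\<psi> f) e = g" unfolding g_def pf by simp
  then have "SS f = P g + v" unfolding fam_def pf by simp
  then have "P g + v = g + e" using fE(2) unfolding g_def by simp
  then have "v - e = g - P g" by (simp add: algebra_simps)
  then show False using assms(2) gK by blast
qed

lemma A_c1_good:
  assumes c: "\<psi> v = 1" and k': "k' \<in> KK" and u: "v - e = k' - P k'" and siP: "si KK P"
  shows "si E SS" "card (Fix E SS) = card (UNIV::'a set) * card (Fix KK P)"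
proof -
  define y where "y = e + k'"
  have yE: "y \<in> E" unfolding y_def using A_e k' subspD(2)[OF A_sub] by blast
  have py: "\<psi> y = 1" unfolding y_def using lfun_add[OF A_l A_e] k' A_pe by simp
  have Sy: "SS y = y"
  proof -
    have "y - scl (\<psi> y) e = k'" by (subst py) (simp add: y_def)
    then have "SS y = P k' + v" unfolding fam_def py by simp
    also have "\<dots> = y" unfolding y_def using u by (simp add: algebra_simps)
    finally show ?thesis .
  qed
  have dec: "\<And>w. w \<in> E \<Longrightarrow> w - scl (\<psi> w) y \<in> KK" using proj_in[OF A_sub A_l yE py] by blast
  have Slin: "lin_on E SS" using opE_lin[OF A_opS] .
  have Sform: "\<And>g c. g \<in> KK \<Longrightarrow> SS (g + scl c y) = P g + scl c y"
  proof -
    fix g c assume g: "g \<in> KK"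
    have "SS (g + scl c y) = SS g + SS (scl c y)"
      using lin_add[OF A_sub Slin] g subspD(3)[OF A_sub yE] by simp
    also have "\<dots> = P g + scl c y" using lin_scl[OF A_sub Slin yE] Sy A_SK g by simp
    finally show "SS (g + scl c y) = P g + scl c y" .
  qed
  have wdec: "\<And>w. w = (w - scl (\<psi> w) y) + scl (\<psi> w) y" by simp
  have pow: "\<And>n w. w \<in> E \<Longrightarrow> (SS ^^ n) w = (P ^^ n) (w - scl (\<psi> w) y) + scl (\<psi> w) y"
  proof -
    fix n w assume w: "w \<in> E"
    show "(SS ^^ n) w = (P ^^ n) (w - scl (\<psi> w) y) + scl (\<psi> w) y"
    proof (induction n)
      case 0 then show ?case by simp
    next
      case (Suc n)
      have "(P ^^ n) (w - scl (\<psi> w) y) \<in> KK" using funpow_in[OF opE_img[OF opP] dec[OF w]] .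
      then have "SS ((P ^^ n) (w - scl (\<psi> w) y) + scl (\<psi> w) y) = P ((P ^^ n) (w - scl (\<psi> w) y)) + scl (\<psi> w) y"
        by (rule Sform)
      then show ?case using Suc.IH by (simp only: funpow.simps comp_apply)
    qed
  qed
  obtain N where N: "\<forall>k\<in>KK. (P ^^ Suc N) k = (P ^^ N) k" using siP unfolding si_def by blast
  have "\<forall>w\<in>E. (SS ^^ Suc N) w = (SS ^^ N) w"
  proof
    fix w assume w: "w \<in> E"
    show "(SS ^^ Suc N) w = (SS ^^ N) w" unfolding pow[OF w, of N] pow[OF w, of "Suc N"]
      using N dec[OF w] by simp
  qed
  then show "si E SS" unfolding si_def by blast
  have "Fix E SS = ext1 (Fix KK P) y"
  proof
    show "Fix E SS \<subseteq> ext1 (Fix KK P) y"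
    proof
      fix f assume "f \<in> Fix E SS"
      then have f: "f \<in> E" "SS f = f" by (auto simp: Fix_def)
      have g: "f - scl (\<psi> f) y \<in> KK" using dec[OF f(1)] .
      have "SS f = P (f - scl (\<psi> f) y) + scl (\<psi> f) y"
        using Sform[OF g, of "\<psi> f"] by simp
      then have "P (f - scl (\<psi> f) y) = f - scl (\<psi> f) y" using f(2) by (simp add: algebra_simps)
      then have "f - scl (\<psi> f) y \<in> Fix KK P" using g by (simp add: Fix_def)
      then show "f \<in> ext1 (Fix KK P) y" unfolding ext1_def by blast
    qed
    show "ext1 (Fix KK P) y \<subseteq> Fix E SS"
    proof
      fix x assume "x \<in> ext1 (Fix KK P) y"
      then obtain c where c: "x - scl c y \<in> Fix KK P" unfolding ext1_def by blast
      define g where "g = x - scl c y"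
      have g: "g \<in> KK" "P g = g" using c unfolding g_def Fix_def by auto
      have x: "x = g + scl c y" unfolding g_def by simp
      have xE: "x \<in> E" unfolding x using g yE subspD(2,3)[OF A_sub] by blast
      have "SS x = x" unfolding x using Sform[OF g(1)] g(2) by simp
      then show "x \<in> Fix E SS" using xE by (simp add: Fix_def)
    qed
  qed
  moreover have "y \<notin> Fix KK P" using py by (simp add: Fix_def)
  moreover have "finite (Fix KK P)" using A_fin by (simp add: Fix_def)
  moreover have "vs.subspace (Fix KK P)" using Fix_sub[OF A_Ksub opP] .
  ultimately show "card (Fix E SS) = card (UNIV::'a set) * card (Fix KK P)"
    using card_ext1[of "Fix KK P" y] by simp
qed

end

lemma sum_01:
  assumes "\<And>c. c \<noteq> 0 \<Longrightarrow> c \<noteq> 1 \<Longrightarrow> f c = 0"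
  shows "(\<Sum>c\<in>(UNIV::'a::{field,finite} set). f c) = f 0 + f 1"
proof -
  have "(\<Sum>c\<in>(UNIV::'a set). f c) = (\<Sum>c\<in>{0,1}. f c)"
    by (rule sum.mono_neutral_right) (use assms in auto)
  also have "\<dots> = f 0 + f 1" by simp
  finally show ?thesis .
qed

lemma mu_Suc: "mu q (Suc s) = - (q ^ s) * mu q s"
proof -
  have "Suc s choose 2 = s + (s choose 2)"
    using binomial_Suc_Suc[of s 1] by (simp add: numeral_2_eq_2 choose_one)
  then show ?thesis unfolding mu_def by (simp add: power_add)
qed

lemma IP_lin:
  assumes sub: "vs.subspace K" and op: "opE K P"
  shows "lin_on K (\<lambda>k. k - P k)"
  unfolding lin_on_def
proof (intro conjI ballI allI)
  have lin: "lin_on K P" using opE_lin[OF op] .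
  fix u v assume "u \<in> K" "v \<in> K"
  then show "u + v - P (u + v) = u - P u + (v - P v)" using lin_add[OF sub lin] by simp
next
  have lin: "lin_on K P" using opE_lin[OF op] .
  fix c v assume "v \<in> K"
  then show "scl c v - P (scl c v) = scl c (v - P v)" using lin_scl[OF sub lin]
    by (simp add: scl_def fun_eq_iff algebra_simps)
qed

lemma caseA_star:
  fixes E :: "(nat \<Rightarrow> 'a::{field,finite}) set"
  assumes st: "setting E \<psi> e" and opP: "opE {w\<in>E. \<psi> w = 0} P"
  shows "(\<Sum>v\<in>E. Gw E (fam \<psi> e P v)) = 0"
proof -
  let ?K = "{w\<in>E. \<psi> w = 0}"
  let ?q = "int (card (UNIV::'a set))"
  note sd = settingD[OF st]
  have Ksub: "vs.subspace ?K" using K_sub[OF st] .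
  have finK: "finite ?K" using sd(1) by simp
  have decomp: "(\<Sum>v\<in>E. Gw E (fam \<psi> e P v)) = (\<Sum>u\<in>?K. \<Sum>c\<in>(UNIV::'a set). Gw E (fam \<psi> e P (u + scl c e)))"
    by (rule sum_decomp[OF sd(2,3,4,5,1)])
  have vE: "\<And>u c. u \<in> ?K \<Longrightarrow> u + scl c e \<in> E" using subspD[OF sd(2)] sd(4) by blast
  have pv: "\<And>u c. u \<in> ?K \<Longrightarrow> \<psi> (u + scl c e) = c"
    using lfun_add[OF sd(3)] lfun_scl[OF sd(3) sd(4)] subspD(3)[OF sd(2) sd(4)] sd(5) by simp
  show ?thesis
  proof (cases "si ?K P")
    case False
    have "\<And>u c. u \<in> ?K \<Longrightarrow> Gw E (fam \<psi> e P (u + scl c e)) = 0"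
    proof -
      fix u c assume u: "u \<in> ?K"
      have "\<not> si E (fam \<psi> e P (u + scl c e))" using A_si_K[OF st opP vE[OF u]] False by blast
      then show "Gw E (fam \<psi> e P (u + scl c e)) = 0" by (simp add: Gw_def)
    qed
    then show ?thesis unfolding decomp by simp
  next
    case True
    define s where "s = vs.dim (Fix ?K P)"
    define IP where "IP = (\<lambda>k. k - P k) ` ?K"
    have IPK: "IP \<subseteq> ?K" unfolding IP_def using opE_in[OF opP] subspD(4)[OF Ksub] by blast
    have finFix: "finite (Fix ?K P)" using sd(1) by (simp add: Fix_def)
    have subFix: "vs.subspace (Fix ?K P)" using Fix_sub[OF Ksub opP] .
    have cardFix: "card (Fix ?K P) = card (UNIV::'a set) ^ s"
      unfolding s_def by (rule card_dim[OF finFix subFix])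
    have inner: "\<And>u. u \<in> ?K \<Longrightarrow> (\<Sum>c\<in>(UNIV::'a set). Gw E (fam \<psi> e P (u + scl c e)))
        = mu ?q s + (if u \<in> IP then mu ?q (Suc s) else 0)"
    proof -
      fix u assume u: "u \<in> ?K"
      have "(\<Sum>c\<in>(UNIV::'a set). Gw E (fam \<psi> e P (u + scl c e)))
         = Gw E (fam \<psi> e P (u + scl 0 e)) + Gw E (fam \<psi> e P (u + scl 1 e))"
      proof (rule sum_01)
        fix c :: 'a assume "c \<noteq> 0" "c \<noteq> 1"
        then show "Gw E (fam \<psi> e P (u + scl c e)) = 0"
          using A_other[OF st opP vE[OF u]] pv[OF u] unfolding Gw_def by simp
      qed
      also have "Gw E (fam \<psi> e P (u + scl 0 e)) = mu ?q s"
      proof -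
        have uE: "u \<in> E" "\<psi> u = 0" using u by auto
        have "si E (fam \<psi> e P u)" "Fix E (fam \<psi> e P u) = Fix ?K P"
          using A_c0[OF st opP uE(1) uE(2) True] by auto
        then show ?thesis unfolding Gw_def s_def by simp
      qed
      also have "Gw E (fam \<psi> e P (u + scl 1 e)) = (if u \<in> IP then mu ?q (Suc s) else 0)"
      proof (cases "u \<in> IP")
        case True': True
        then obtain k' where k': "k' \<in> ?K" "u = k' - P k'" unfolding IP_def by blast
        have p1: "\<psi> (u + e) = 1" using pv[OF u, of 1] by simp
        have ue: "u + e \<in> E" using vE[OF u, of 1] by simp
        have d: "u + e - e = k' - P k'" using k' by simp
        note g = A_c1_good[OF st opP ue p1 k'(1) d True]
        have "card (Fix E (fam \<psi> e P (u + e))) = card (UNIV::'a set) ^ Suc s"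
          using g(2) cardFix by simp
        moreover have "finite (Fix E (fam \<psi> e P (u + e)))" using sd(1) by (simp add: Fix_def)
        moreover have "vs.subspace (Fix E (fam \<psi> e P (u + e)))"
          using Fix_sub[OF sd(2) A_opS[OF st opP ue]] .
        ultimately have "vs.dim (Fix E (fam \<psi> e P (u + e))) = Suc s" using dim_eqI by blast
        then show ?thesis using g(1) True' unfolding Gw_def by simp
      next
        case False
        have p1: "\<psi> (u + e) = 1" using pv[OF u, of 1] by simp
        have ue: "u + e \<in> E" using vE[OF u, of 1] by simp
        have "u + e - e \<notin> (\<lambda>k. k - P k) ` ?K" using False unfolding IP_def by simp
        then have "\<not> si E (fam \<psi> e P (u + e))" using A_c1_bad[OF st opP ue p1] by blast
        then show ?thesis using False unfolding Gw_def by simp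
      qed
      finally show "(\<Sum>c\<in>(UNIV::'a set). Gw E (fam \<psi> e P (u + scl c e)))
        = mu ?q s + (if u \<in> IP then mu ?q (Suc s) else 0)" .
    qed
    have "(\<Sum>v\<in>E. Gw E (fam \<psi> e P v)) = (\<Sum>u\<in>?K. mu ?q s + (if u \<in> IP then mu ?q (Suc s) else 0))"
      unfolding decomp using inner by (rule sum.cong[OF refl])
    also have "\<dots> = int (card ?K) * mu ?q s + (\<Sum>u\<in>?K. if u \<in> IP then mu ?q (Suc s) else 0)"
      by (simp add: sum.distrib)
    also have "(\<Sum>u\<in>?K. if u \<in> IP then mu ?q (Suc s) else 0) = (\<Sum>u\<in>?K \<inter> IP. mu ?q (Suc s))"
      using sum.inter_restrict[OF finK, of "\<lambda>_. mu ?q (Suc s)" IP] by simp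
    also have "?K \<inter> IP = IP" using IPK by blast
    also have "card ?K = card (Fix ?K P) * card IP"
    proof -
      have "card ?K = card {k\<in>?K. k - P k = 0} * card IP"
        unfolding IP_def by (rule rank_nullity_card[OF Ksub IP_lin[OF Ksub opP] finK])
      moreover have "{k\<in>?K. k - P k = 0} = Fix ?K P" by (auto simp: Fix_def)
      ultimately show ?thesis by simp
    qed
    finally show ?thesis using cardFix by (simp add: mu_Suc)
  qed
qed

lemma fiber_card:
  assumes sub: "vs.subspace E" and lin: "lin_on E f" and y: "y \<in> f ` E"
  shows "card {a\<in>E. f a = y} = card {w\<in>E. f w = 0}"
proof -
  obtain x0 where x0: "x0 \<in> E" "y = f x0" using y by auto
  have "bij_betw (\<lambda>w. w - x0) {a\<in>E. f a = y} {w\<in>E. f w = 0}"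
  proof (rule bij_betwI[where g = "\<lambda>w. w + x0"])
    show "(\<lambda>w. w - x0) \<in> {a \<in> E. f a = y} \<rightarrow> {w \<in> E. f w = 0}"
    proof
      fix w assume "w \<in> {a \<in> E. f a = y}"
      then show "w - x0 \<in> {w \<in> E. f w = 0}" using x0 lin_diff[OF sub lin, of w x0] subspD(4)[OF sub, of w x0] by simp
    qed
    show "(\<lambda>w. w + x0) \<in> {w \<in> E. f w = 0} \<rightarrow> {a \<in> E. f a = y}"
    proof
      fix w assume "w \<in> {a \<in> E. f a = 0}"
      then show "w + x0 \<in> {w \<in> E. f w = y}" using x0 lin_add[OF sub lin, of w x0] subspD(2)[OF sub, of w x0] by simp
    qed
  qed simp_all
  then show ?thesis by (rule bij_betw_same_card)
qed

lemma proj_add: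
  assumes l: "lfun E \<phi>" and "u \<in> E" "w \<in> E"
  shows "(u + w) - scl (\<phi> (u + w)) y = (u - scl (\<phi> u) y) + (w - scl (\<phi> w) y)"
  using lfun_add[OF l assms(2,3)] by (simp add: scl_def fun_eq_iff algebra_simps)

lemma proj_scl:
  assumes l: "lfun E \<phi>" and "w \<in> E"
  shows "scl c w - scl (\<phi> (scl c w)) y = scl c (w - scl (\<phi> w) y)"
  using lfun_scl[OF l assms(2)] by (simp add: scl_def fun_eq_iff algebra_simps)

lemma setting_sub:
  assumes st: "setting E \<psi> e" and l: "lfun E \<phi>" and pe: "\<phi> e = 0"
  shows "setting {w\<in>E. \<phi> w = 0} \<psi> e"
  using settingD[OF st] hyp_sub[OF settingD(2)[OF st] l] pe unfolding setting_def lfun_def by auto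

lemma B1_reduce:
  fixes E :: "(nat \<Rightarrow> 'a::{field,finite}) set"
  assumes st: "setting E \<psi> e" and P: "lin_on {w\<in>E. \<psi> w = 0} P" and PK: "P ` {w\<in>E. \<psi> w = 0} \<subseteq> E"
    and z: "z \<in> E" "\<psi> z = 0" "z \<noteq> 0" "P z = 0"
    and IH: "\<And>(E'::(nat \<Rightarrow> 'a) set) \<psi>' e' P'. card E' < card E \<Longrightarrow> setting E' \<psi>' e' \<Longrightarrow> lin_on {w\<in>E'. \<psi>' w = 0} P'
        \<Longrightarrow> P' ` {w\<in>E'. \<psi>' w = 0} \<subseteq> E' \<Longrightarrow> (\<Sum>v\<in>E'. Gw E' (fam \<psi>' e' P' v)) = 0"
  shows "(\<Sum>v\<in>E. Gw E (fam \<psi> e P v)) = 0"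
proof -
  note sd = settingD[OF st]
  let ?K = "{w\<in>E. \<psi> w = 0}"
  have Ksub: "vs.subspace ?K" using K_sub[OF st] .
  obtain i where i: "z i \<noteq> 0" using z(3) by (auto simp: fun_eq_iff)
  define \<phi> where "\<phi> = (\<lambda>w. (w i - \<psi> w * e i) / z i)"
  have l: "lfun E \<phi>" unfolding lfun_def \<phi>_def
    using lfun_add[OF sd(3)] lfun_scl[OF sd(3)] by (simp add: scl_apply diff_divide_distrib add_divide_distrib algebra_simps)
  have pz: "\<phi> z = 1" unfolding \<phi>_def using z(2) i by simp
  have pe: "\<phi> e = 0" unfolding \<phi>_def using sd(5) by simp
  define H where "H = {w\<in>E. \<phi> w = 0}"
  define \<pi> where "\<pi> = (\<lambda>w. w - scl (\<phi> w) z)"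
  have stH: "setting H \<psi> e" unfolding H_def by (rule setting_sub[OF st l pe])
  have HE: "H \<subseteq> E" unfolding H_def by auto
  have piH: "\<And>w. w \<in> E \<Longrightarrow> \<pi> w \<in> H" unfolding H_def \<pi>_def using proj_in[OF sd(2) l z(1) pz] by blast
  let ?KH = "{w\<in>H. \<psi> w = 0}"
  define P' where "P' = (\<lambda>w. \<pi> (P w))"
  have KHK: "?KH \<subseteq> ?K" using HE by auto
  have P'lin: "lin_on ?KH P'" unfolding lin_on_def P'_def
  proof (intro conjI ballI allI)
    fix u w assume "u \<in> ?KH" "w \<in> ?KH"
    then have uw: "u \<in> ?K" "w \<in> ?K" using KHK by auto
    have "P (u + w) = P u + P w" using lin_add[OF Ksub P uw] .
    moreover have "P u \<in> E" "P w \<in> E" using PK uw by auto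
    ultimately show "\<pi> (P (u + w)) = \<pi> (P u) + \<pi> (P w)" unfolding \<pi>_def using proj_add[OF l] by simp
  next
    fix c w assume "w \<in> ?KH"
    then have w: "w \<in> ?K" using KHK by auto
    have "P (scl c w) = scl c (P w)" using lin_scl[OF Ksub P w] .
    moreover have "P w \<in> E" using PK w by auto
    ultimately show "\<pi> (P (scl c w)) = scl c (\<pi> (P w))" unfolding \<pi>_def using proj_scl[OF l] by simp
  qed
  have P'K: "P' ` ?KH \<subseteq> H" unfolding P'_def using piH PK KHK by blast
  have zH: "z \<notin> H" unfolding H_def using pz by simp
  have cardH: "card H < card E" using HE zH z(1) sd(1) by (metis psubsetI psubset_card_mono)
  have IHH: "(\<Sum>h\<in>H. Gw H (fam \<psi> e P' h)) = 0" using IH[OF cardH stH P'lin P'K] .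
  have trm: "\<And>v. v \<in> E \<Longrightarrow> Gw E (fam \<psi> e P v) = Gw H (fam \<psi> e P' (\<pi> v))"
  proof -
    fix v assume v: "v \<in> E"
    have op: "opE E (fam \<psi> e P v)" using fam_op[OF st P PK v] .
    have Sz: "fam \<psi> e P v z = 0" using z by (simp add: fam_def)
    have "Gw E (fam \<psi> e P v) = Gw H (\<lambda>w. \<pi> (fam \<psi> e P v w))"
      unfolding H_def \<pi>_def by (rule Gw_compress[OF sd(1,2) l z(1) pz op Sz])
    also have "\<dots> = Gw H (fam \<psi> e P' (\<pi> v))"
    proof (rule Gw_cong)
      show "(\<lambda>w. \<pi> (fam \<psi> e P v w)) ` H \<subseteq> H" using compress(1)[OF sd(2) l z(1) pz op Sz]
        unfolding opE_def H_def \<pi>_def by blast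
    next
      fix w assume w: "w \<in> H"
      then have wE: "w \<in> E" using HE by auto
      have d: "w - scl (\<psi> w) e \<in> ?K" using fam_decomp[OF st wE] .
      have dH: "w - scl (\<psi> w) e \<in> ?KH"
      proof -
        have "\<phi> (w - scl (\<psi> w) e) = \<phi> w - \<phi> (scl (\<psi> w) e)"
          using lfun_diff[OF sd(2) l wE subspD(3)[OF sd(2) sd(4)]] .
        also have "\<dots> = 0" using w lfun_scl[OF l sd(4)] pe unfolding H_def by simp
        finally show ?thesis using d unfolding H_def by simp
      qed
      have PdE: "P (w - scl (\<psi> w) e) \<in> E" using PK d by blast
      have svE: "scl (\<psi> w) v \<in> E" using subspD(3)[OF sd(2) v] .
      have f1: "fam \<psi> e P v w = P (w - scl (\<psi> w) e) + scl (\<psi> w) v" by (simp only: fam_def)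
      have f2: "fam \<psi> e P' (\<pi> v) w = \<pi> (P (w - scl (\<psi> w) e)) + scl (\<psi> w) (\<pi> v)"
        by (simp only: fam_def P'_def)
      have "\<pi> (fam \<psi> e P v w) = \<pi> (P (w - scl (\<psi> w) e)) + \<pi> (scl (\<psi> w) v)"
        unfolding f1 \<pi>_def by (rule proj_add[OF l PdE svE])
      also have "\<pi> (scl (\<psi> w) v) = scl (\<psi> w) (\<pi> v)" unfolding \<pi>_def using proj_scl[OF l v] .
      finally show "\<pi> (fam \<psi> e P v w) = fam \<psi> e P' (\<pi> v) w" unfolding f2 .
    qed
    finally show "Gw E (fam \<psi> e P v) = Gw H (fam \<psi> e P' (\<pi> v))" .
  qed
  have "(\<Sum>v\<in>E. Gw E (fam \<psi> e P v)) = (\<Sum>v\<in>E. Gw H (fam \<psi> e P' (\<pi> v)))"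
    using trm by (rule sum.cong[OF refl])
  also have "\<dots> = (\<Sum>h\<in>H. \<Sum>c\<in>(UNIV::'a set). Gw H (fam \<psi> e P' (\<pi> (h + scl c z))))"
    unfolding H_def by (rule sum_decomp[OF sd(2) l z(1) pz sd(1)])
  also have "\<dots> = (\<Sum>h\<in>H. \<Sum>c\<in>(UNIV::'a set). Gw H (fam \<psi> e P' h))"
  proof (rule sum.cong[OF refl], rule sum.cong[OF refl])
    fix h c assume h: "h \<in> H"
    then have hE: "h \<in> E" "\<phi> h = 0" using HE unfolding H_def by auto
    have "\<phi> (h + scl c z) = c"
      using lfun_add[OF l hE(1) subspD(3)[OF sd(2) z(1)]] lfun_scl[OF l z(1)] hE(2) pz by simp
    then show "Gw H (fam \<psi> e P' (\<pi> (h + scl c z))) = Gw H (fam \<psi> e P' h)" unfolding \<pi>_def by simp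
  qed
  also have "\<dots> = int (card (UNIV::'a set)) * (\<Sum>h\<in>H. Gw H (fam \<psi> e P' h))"
    by (simp add: sum_distrib_left)
  also have "\<dots> = 0" using IHH by simp
  finally show ?thesis .
qed

lemma class_zero:
  fixes E :: "(nat \<Rightarrow> 'a::{field,finite}) set"
  assumes st: "setting E \<psi> e" and P: "lin_on {w\<in>E. \<psi> w = 0} P" and PK: "P ` {w\<in>E. \<psi> w = 0} \<subseteq> E"
    and k0: "k0 \<in> E" "\<psi> k0 = 0" "\<psi> (P k0) \<noteq> 0"
    and IH: "\<And>(E'::(nat \<Rightarrow> 'a) set) \<psi>' e' P'. card E' < card E \<Longrightarrow> setting E' \<psi>' e' \<Longrightarrow> lin_on {w\<in>E'. \<psi>' w = 0} P'
        \<Longrightarrow> P' ` {w\<in>E'. \<psi>' w = 0} \<subseteq> E' \<Longrightarrow> (\<Sum>v\<in>E'. Gw E' (fam \<psi>' e' P' v)) = 0"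
  shows "(\<Sum>v\<in>P ` {w\<in>E. \<psi> w = 0}. Gw E (fam \<psi> e P v)) = 0"
proof -
  note sd = settingD[OF st]
  let ?K = "{w\<in>E. \<psi> w = 0}"
  have Ksub: "vs.subspace ?K" using K_sub[OF st] .
  have finK: "finite ?K" using sd(1) by simp
  have k0K: "k0 \<in> ?K" using k0 by simp
  define a where "a = \<psi> (P k0)"
  define e' where "e' = scl (1/a) k0"
  define \<psi>' where "\<psi>' = (\<lambda>k. \<psi> (P k))"
  have e'K: "e' \<in> ?K" unfolding e'_def using subspD(3)[OF Ksub k0K] .
  have PE: "\<And>k. k \<in> ?K \<Longrightarrow> P k \<in> E" using PK by blast
  have l': "lfun ?K \<psi>'" unfolding lfun_def \<psi>'_def
  proof (intro conjI ballI allI)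
    fix u w assume "u \<in> ?K" "w \<in> ?K"
    then show "\<psi> (P (u + w)) = \<psi> (P u) + \<psi> (P w)"
      using lin_add[OF Ksub P] lfun_add[OF sd(3)] PE by simp
  next
    fix c w assume "w \<in> ?K"
    then show "\<psi> (P (scl c w)) = c * \<psi> (P w)"
      using lin_scl[OF Ksub P] lfun_scl[OF sd(3)] PE by simp
  qed
  have pe': "\<psi>' e' = 1" unfolding \<psi>'_def e'_def
    using lin_scl[OF Ksub P k0K] lfun_scl[OF sd(3) PE[OF k0K]] k0(3) unfolding a_def by simp
  have st': "setting ?K \<psi>' e'" unfolding setting_def using finK Ksub l' e'K pe' by blast
  let ?K' = "{w\<in>?K. \<psi>' w = 0}"
  have P'lin: "lin_on ?K' P" using P unfolding lin_on_def by auto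
  have P'K: "P ` ?K' \<subseteq> ?K" using PE unfolding \<psi>'_def by auto
  have eK: "e \<notin> ?K" using sd(5) by simp
  have cardK: "card ?K < card E" using eK sd(4) sd(1) by (metis (no_types, lifting) mem_Collect_eq psubsetI psubset_card_mono subsetI)
  have IHK: "(\<Sum>v'\<in>?K. Gw ?K (fam \<psi>' e' P v')) = 0" using IH[OF cardK st' P'lin P'K] .
  define t where "t = P e' - e"
  have tK: "t \<in> ?K"
  proof -
    have "\<psi> t = \<psi> (P e') - \<psi> e" unfolding t_def using lfun_diff[OF sd(2) sd(3) PE[OF e'K] sd(4)] .
    also have "\<dots> = 0" using pe' sd(5) unfolding \<psi>'_def by simp
    finally show ?thesis unfolding t_def using subspD(4)[OF sd(2) PE[OF e'K] sd(4)] by simp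
  qed
  have step1: "(\<Sum>p\<in>?K. Gw E (fam \<psi> e P (P p))) = 0"
  proof -
    have trm: "\<And>p. p \<in> ?K \<Longrightarrow> Gw E (fam \<psi> e P (P p)) = Gw ?K (fam \<psi>' e' P (t + p))"
    proof -
      fix p assume p: "p \<in> ?K"
      define y where "y = e - p"
      have pE: "p \<in> E" using p by simp
      have yE: "y \<in> E" unfolding y_def using subspD(4)[OF sd(2) sd(4) pE] .
      have py: "\<psi> y = 1" unfolding y_def using lfun_diff[OF sd(2) sd(3) sd(4) pE] p sd(5) by simp
      have op: "opE E (fam \<psi> e P (P p))" using fam_op[OF st P PK PE[OF p]] .
      have Sy: "fam \<psi> e P (P p) y = 0"
      proof -
        have "y - scl (\<psi> y) e = - p" unfolding y_def by (subst py[unfolded y_def]) simp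
        moreover have "P (- p) = - P p" using lin_neg[OF Ksub P p] .
        ultimately show ?thesis unfolding fam_def py by simp
      qed
      have "Gw E (fam \<psi> e P (P p)) = Gw ?K (\<lambda>w. fam \<psi> e P (P p) w - scl (\<psi> (fam \<psi> e P (P p) w)) y)"
        by (rule Gw_compress[OF sd(1,2,3) yE py op Sy])
      also have "\<dots> = Gw ?K (fam \<psi>' e' P (t + p))"
      proof (rule Gw_cong)
        show "(\<lambda>w. fam \<psi> e P (P p) w - scl (\<psi> (fam \<psi> e P (P p) w)) y) ` ?K \<subseteq> ?K"
          using compress(1)[OF sd(2,3) yE py op Sy] unfolding opE_def by blast
      next
        fix w assume w: "w \<in> ?K"
        have Sw: "fam \<psi> e P (P p) w = P w" using w by (simp add: fam_K)
        have "P (w - scl (\<psi>' w) e') = P w - scl (\<psi>' w) (P e')"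
          using lin_diff[OF Ksub P w subspD(3)[OF Ksub e'K]] lin_scl[OF Ksub P e'K] by simp
        then have "fam \<psi>' e' P (t + p) w = P w - scl (\<psi>' w) (P e') + scl (\<psi>' w) (t + p)"
          by (simp only: fam_def)
        also have "\<dots> = P w - scl (\<psi> (P w)) y"
          unfolding t_def y_def \<psi>'_def by (simp add: scl_def fun_eq_iff algebra_simps)
        finally show "fam \<psi> e P (P p) w - scl (\<psi> (fam \<psi> e P (P p) w)) y = fam \<psi>' e' P (t + p) w"
          using Sw by simp
      qed
      finally show "Gw E (fam \<psi> e P (P p)) = Gw ?K (fam \<psi>' e' P (t + p))" .
    qed
    have "(\<Sum>p\<in>?K. Gw E (fam \<psi> e P (P p))) = (\<Sum>p\<in>?K. Gw ?K (fam \<psi>' e' P (t + p)))"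
      using trm by (rule sum.cong[OF refl])
    also have "\<dots> = (\<Sum>v'\<in>?K. Gw ?K (fam \<psi>' e' P v'))"
    proof (rule sum.reindex_bij_witness[where i = "\<lambda>v. v - t" and j = "\<lambda>p. t + p"])
      fix a assume "a \<in> ?K" then show "a - t \<in> ?K" using subspD(4)[OF Ksub _ tK] by blast
    next
      fix a assume "a \<in> ?K" then show "t + a \<in> ?K" using subspD(2)[OF Ksub tK] by blast
    qed simp_all
    also have "\<dots> = 0" using IHK .
    finally show ?thesis .
  qed
  define g where "g = (\<lambda>v. Gw E (fam \<psi> e P v))"
  have "(\<Sum>p\<in>?K. g (P p)) = (\<Sum>v\<in>P ` ?K. \<Sum>p\<in>{p\<in>?K. P p = v}. g (P p))"
    by (rule sum.image_gen[OF finK])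
  also have "\<dots> = (\<Sum>v\<in>P ` ?K. int (card {p\<in>?K. P p = 0}) * g v)"
  proof (rule sum.cong[OF refl])
    fix v assume v: "v \<in> P ` ?K"
    have "(\<Sum>p\<in>{p\<in>?K. P p = v}. g (P p)) = (\<Sum>p\<in>{p\<in>?K. P p = v}. g v)" by simp
    also have "\<dots> = int (card {p\<in>?K. P p = v}) * g v" by simp
    also have "card {p\<in>?K. P p = v} = card {p\<in>?K. P p = 0}" using fiber_card[OF Ksub P v] .
    finally show "(\<Sum>p\<in>{p\<in>?K. P p = v}. g (P p)) = int (card {p\<in>?K. P p = 0}) * g v" .
  qed
  also have "\<dots> = int (card {p\<in>?K. P p = 0}) * (\<Sum>v\<in>P ` ?K. g v)" by (simp add: sum_distrib_left)
  finally have eq: "int (card {p\<in>?K. P p = 0}) * (\<Sum>v\<in>P ` ?K. g v) = 0" using step1 unfolding g_def by simp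
  have "0 \<in> {p\<in>?K. P p = 0}" using subspD(1)[OF Ksub] lin_zero[OF Ksub P] by simp
  then have ne: "{p\<in>?K. P p = 0} \<noteq> {}" by blast
  have fin0: "finite {p\<in>?K. P p = 0}" using sd(1) by simp
  have "card {p\<in>?K. P p = 0} \<noteq> 0" using ne fin0 by (simp add: card_eq_0_iff)
  then show ?thesis using eq unfolding g_def by simp
qed

lemma inj_case:
  fixes E :: "(nat \<Rightarrow> 'a::{field,finite}) set"
  assumes st: "setting E \<psi> e" and P: "lin_on {w\<in>E. \<psi> w = 0} P" and PK: "P ` {w\<in>E. \<psi> w = 0} \<subseteq> E"
    and k0: "k0 \<in> E" "\<psi> k0 = 0" "\<psi> (P k0) \<noteq> 0"
    and inj: "\<And>z. z \<in> E \<Longrightarrow> \<psi> z = 0 \<Longrightarrow> P z = 0 \<Longrightarrow> z = 0"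
    and v: "v \<in> E" "v \<notin> P ` {w\<in>E. \<psi> w = 0}"
  shows "\<not> si E (fam \<psi> e P v)"
proof
  assume si: "si E (fam \<psi> e P v)"
  note sd = settingD[OF st]
  let ?K = "{w\<in>E. \<psi> w = 0}" and ?S = "fam \<psi> e P v"
  have Ksub: "vs.subspace ?K" using K_sub[OF st] .
  have op: "opE E ?S" using fam_op[OF st P PK v(1)] .
  have lin: "lin_on E ?S" using opE_lin[OF op] .
  have ker: "\<And>w. w \<in> E \<Longrightarrow> ?S w = 0 \<Longrightarrow> w = 0"
  proof -
    fix w assume w: "w \<in> E" and Sw: "?S w = 0"
    have d: "w - scl (\<psi> w) e \<in> ?K" using fam_decomp[OF st w] .
    have eq: "P (w - scl (\<psi> w) e) + scl (\<psi> w) v = 0" using Sw by (simp only: fam_def)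
    show "w = 0"
    proof (cases "\<psi> w = 0")
      case True
      then have "P w = 0" using eq by simp
      then show ?thesis using inj w True by blast
    next
      case False
      have "scl (\<psi> w) v = - P (w - scl (\<psi> w) e)" using eq by (simp add: eq_neg_iff_add_eq_0 add.commute)
      then have "scl (1 / \<psi> w) (scl (\<psi> w) v) = scl (1 / \<psi> w) (- P (w - scl (\<psi> w) e))" by simp
      then have "v = scl (- 1 / \<psi> w) (P (w - scl (\<psi> w) e))" using False by (simp add: scl_def fun_eq_iff)
      also have "\<dots> = P (scl (- 1 / \<psi> w) (w - scl (\<psi> w) e))" by (rule lin_scl[OF Ksub P d, symmetric])
      finally have "v \<in> P ` ?K" using subspD(3)[OF Ksub d] by blast
      then show ?thesis using v(2) by blast
    qed
  qed
  have injS: "\<And>a b. a \<in> E \<Longrightarrow> b \<in> E \<Longrightarrow> ?S a = ?S b \<Longrightarrow> a = b"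
  proof -
    fix a b assume a: "a \<in> E" and b: "b \<in> E" and eq: "?S a = ?S b"
    have "?S (a - b) = 0" using lin_diff[OF sd(2) lin a b] eq by simp
    then have "a - b = 0" using ker subspD(4)[OF sd(2) a b] by blast
    then show "a = b" by simp
  qed
  have injN: "\<And>n a b. a \<in> E \<Longrightarrow> b \<in> E \<Longrightarrow> (?S ^^ n) a = (?S ^^ n) b \<Longrightarrow> a = b"
  proof -
    fix n show "\<And>a b. a \<in> E \<Longrightarrow> b \<in> E \<Longrightarrow> (?S ^^ n) a = (?S ^^ n) b \<Longrightarrow> a = b"
    proof (induction n)
      case 0 then show ?case by simp
    next
      case (Suc n)
      have "(?S ^^ n) (?S a) = (?S ^^ n) (?S b)" using Suc.prems(3) by (simp only: funpow_Suc_right comp_apply)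
      then have "?S a = ?S b" using Suc.IH opE_in[OF op] Suc.prems(1,2) by blast
      then show ?case using injS Suc.prems(1,2) by blast
    qed
  qed
  obtain N where N: "\<forall>w\<in>E. (?S ^^ Suc N) w = (?S ^^ N) w" using si unfolding si_def by blast
  have "(?S ^^ N) (?S k0) = (?S ^^ N) k0" using N k0(1) by (simp only: funpow_Suc_right comp_apply)
  then have "?S k0 = k0" using injN opE_in[OF op k0(1)] k0(1) by blast
  moreover have "?S k0 = P k0" using k0(2) by (simp add: fam_K)
  ultimately have "\<psi> (P k0) = 0" using k0(2) by simp
  then show False using k0(3) by simp
qed

theorem star:
  fixes E :: "(nat \<Rightarrow> 'a::{field,finite}) set"
  assumes "setting E \<psi> e" "lin_on {w\<in>E. \<psi> w = 0} P" "P ` {w\<in>E. \<psi> w = 0} \<subseteq> E"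
  shows "(\<Sum>v\<in>E. Gw E (fam \<psi> e P v)) = 0"
  using assms
proof (induction "card E" arbitrary: E \<psi> e P rule: less_induct)
  case less
  note st = less.prems(1) and P = less.prems(2) and PK = less.prems(3)
  note sd = settingD[OF st]
  let ?K = "{w\<in>E. \<psi> w = 0}"
  have IH: "\<And>(E'::(nat \<Rightarrow> 'a) set) \<psi>' e' P'. card E' < card E \<Longrightarrow> setting E' \<psi>' e' \<Longrightarrow> lin_on {w\<in>E'. \<psi>' w = 0} P'
        \<Longrightarrow> P' ` {w\<in>E'. \<psi>' w = 0} \<subseteq> E' \<Longrightarrow> (\<Sum>v\<in>E'. Gw E' (fam \<psi>' e' P' v)) = 0"
    using less.hyps by blast
  show ?case
  proof (cases "\<forall>k\<in>?K. \<psi> (P k) = 0")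
    case True
    have "opE ?K P" unfolding opE_def using P PK True by auto
    then show ?thesis by (rule caseA_star[OF st])
  next
    case False
    then obtain k0 where k0: "k0 \<in> E" "\<psi> k0 = 0" "\<psi> (P k0) \<noteq> 0" by blast
    show ?thesis
    proof (cases "\<exists>z. z \<in> E \<and> \<psi> z = 0 \<and> z \<noteq> 0 \<and> P z = 0")
      case True
      then obtain z where z: "z \<in> E" "\<psi> z = 0" "z \<noteq> 0" "P z = 0" by blast
      show ?thesis by (rule B1_reduce[OF st P PK z IH])
    next
      case False
      then have inj: "\<And>z. z \<in> E \<Longrightarrow> \<psi> z = 0 \<Longrightarrow> P z = 0 \<Longrightarrow> z = 0" by blast
      have "(\<Sum>v\<in>E. Gw E (fam \<psi> e P v)) = (\<Sum>v\<in>E - P ` ?K. Gw E (fam \<psi> e P v)) + (\<Sum>v\<in>P ` ?K. Gw E (fam \<psi> e P v))"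
        using sum.subset_diff[OF PK sd(1)] by simp
      also have "(\<Sum>v\<in>P ` ?K. Gw E (fam \<psi> e P v)) = 0" by (rule class_zero[OF st P PK k0 IH])
      also have "(\<Sum>v\<in>E - P ` ?K. Gw E (fam \<psi> e P v)) = 0"
      proof (rule sum.neutral, rule ballI)
        fix v assume "v \<in> E - P ` ?K"
        then have "\<not> si E (fam \<psi> e P v)" using inj_case[OF st P PK k0 inj] by blast
        then show "Gw E (fam \<psi> e P v) = 0" by (simp add: Gw_def)
      qed
      finally show ?thesis by simp
    qed
  qed
qed

definition BB :: "int \<Rightarrow> nat \<Rightarrow> nat \<Rightarrow> nat \<Rightarrow> int" where
  "BB q j d x = (if x \<le> j then qbinom q (d - x) (j - x) else 0)"

lemma qb_step:
  assumes "\<rho> \<le> d"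
  shows "q ^ \<rho> * (BB q j (Suc d) \<rho> - BB q j (Suc d) (Suc \<rho>)) = q ^ j * BB q j d \<rho>"
proof (cases "\<rho> \<le> j")
  case False
  then show ?thesis by (simp add: BB_def)
next
  case True
  show ?thesis
  proof (cases "\<rho> = j")
    case True
    then show ?thesis by (simp add: BB_def)
  next
    case False
    with True have lt: "\<rho> < j" by simp
    define a where "a = d - \<rho>"
    define b where "b = j - Suc \<rho>"
    have e1: "Suc d - \<rho> = Suc a" "j - \<rho> = Suc b" "Suc d - Suc \<rho> = a" "j - Suc \<rho> = b" "d - \<rho> = a"
      using assms lt unfolding a_def b_def by auto
    have "BB q j (Suc d) \<rho> - BB q j (Suc d) (Suc \<rho>) = q ^ Suc b * qbinom q a (Suc b)"
      unfolding BB_def using lt e1 by simp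
    moreover have "q ^ \<rho> * q ^ Suc b = q ^ j"
    proof -
      have "\<rho> + Suc b = j" using lt unfolding b_def by simp
      then show ?thesis by (metis power_add)
    qed
    ultimately show ?thesis unfolding BB_def using lt e1 by (simp add: mult.assoc[symmetric])
  qed
qed

definition Wt :: "nat \<Rightarrow> (nat \<Rightarrow> 'a::{field,finite}) set \<Rightarrow> ((nat \<Rightarrow> 'a) \<Rightarrow> (nat \<Rightarrow> 'a)) \<Rightarrow> int" where
  "Wt j E S = Gw E S * BB (int (card (UNIV::'a set))) j (vs.dim E) (vs.dim (S ` E))"

lemma dim_E_K:
  fixes E :: "(nat \<Rightarrow> 'a::{field,finite}) set"
  assumes st: "setting E \<psi> e"
  shows "vs.dim E = Suc (vs.dim {w\<in>E. \<psi> w = 0})"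
proof -
  note sd = settingD[OF st]
  let ?K = "{w\<in>E. \<psi> w = 0}"
  have Ksub: "vs.subspace ?K" using K_sub[OF st] .
  have "ext1 ?K e = E"
  proof
    show "ext1 ?K e \<subseteq> E"
    proof
      fix x assume "x \<in> ext1 ?K e"
      then obtain c where c: "x - scl c e \<in> ?K" unfolding ext1_def by blast
      have "x = (x - scl c e) + scl c e" by simp
      moreover have "(x - scl c e) + scl c e \<in> E" using c subspD(2)[OF sd(2) _ subspD(3)[OF sd(2) sd(4)]] by blast
      ultimately show "x \<in> E" by simp
    qed
    show "E \<subseteq> ext1 ?K e" unfolding ext1_def using fam_decomp[OF st] by blast
  qed
  moreover have "e \<notin> ?K" using sd(5) by simp
  moreover have "finite ?K" using sd(1) by simp
  ultimately have "card E = card (UNIV::'a set) * card ?K" using card_ext1[OF _ Ksub, of e] by simp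
  then have "card E = card (UNIV::'a set) ^ Suc (vs.dim ?K)"
    using card_dim[OF \<open>finite ?K\<close> Ksub] by simp
  then show ?thesis using dim_eqI[OF sd(1,2)] by blast
qed

lemma rank_fam:
  fixes E :: "(nat \<Rightarrow> 'a::{field,finite}) set"
  assumes st: "setting E \<psi> e" and P: "lin_on {w\<in>E. \<psi> w = 0} P" and PK: "P ` {w\<in>E. \<psi> w = 0} \<subseteq> E"
    and v: "v \<in> E"
  shows "vs.dim (fam \<psi> e P v ` E) = (if v \<in> P ` {w\<in>E. \<psi> w = 0} then vs.dim (P ` {w\<in>E. \<psi> w = 0})
           else Suc (vs.dim (P ` {w\<in>E. \<psi> w = 0})))"
proof -
  note sd = settingD[OF st]
  let ?K = "{w\<in>E. \<psi> w = 0}"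
  have Ksub: "vs.subspace ?K" using K_sub[OF st] .
  have im: "fam \<psi> e P v ` E = ext1 (P ` ?K) v" using fam_image[OF st P] .
  have Isub: "vs.subspace (P ` ?K)" using lin_sub_image[OF Ksub P] .
  have finI: "finite (P ` ?K)" using sd(1) by simp
  show ?thesis
  proof (cases "v \<in> P ` ?K")
    case True
    then show ?thesis unfolding im using ext1_same[OF Isub True] by simp
  next
    case False
    have "card (ext1 (P ` ?K) v) = card (UNIV::'a set) * card (P ` ?K)" using card_ext1[OF finI Isub False] .
    then have c: "card (ext1 (P ` ?K) v) = card (UNIV::'a set) ^ Suc (vs.dim (P ` ?K))"
      using card_dim[OF finI Isub] by simp
    have "ext1 (P ` ?K) v \<subseteq> E" using im opE_img[OF fam_op[OF st P PK v]] by simp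
    then have "finite (ext1 (P ` ?K) v)" using sd(1) finite_subset by blast
    then have "vs.dim (ext1 (P ` ?K) v) = Suc (vs.dim (P ` ?K))"
      using dim_eqI c ext1_subspace[OF Isub] by blast
    then show ?thesis unfolding im using False by simp
  qed
qed

lemma caseB_weighted:
  fixes E :: "(nat \<Rightarrow> 'a::{field,finite}) set"
  assumes st: "setting E \<psi> e" and P: "lin_on {w\<in>E. \<psi> w = 0} P" and PK: "P ` {w\<in>E. \<psi> w = 0} \<subseteq> E"
    and k0: "k0 \<in> E" "\<psi> k0 = 0" "\<psi> (P k0) \<noteq> 0"
  shows "(\<Sum>v\<in>E. Wt j E (fam \<psi> e P v)) = 0"
proof -
  note sd = settingD[OF st]
  let ?K = "{w\<in>E. \<psi> w = 0}"
  let ?B = "BB (int (card (UNIV::'a set))) j (vs.dim E)"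
  let ?r = "vs.dim (P ` ?K)"
  have IH: "\<And>(E'::(nat \<Rightarrow> 'a) set) \<psi>' e' P'. card E' < card E \<Longrightarrow> setting E' \<psi>' e' \<Longrightarrow> lin_on {w\<in>E'. \<psi>' w = 0} P'
        \<Longrightarrow> P' ` {w\<in>E'. \<psi>' w = 0} \<subseteq> E' \<Longrightarrow> (\<Sum>v\<in>E'. Gw E' (fam \<psi>' e' P' v)) = 0"
    using star by blast
  have cz: "(\<Sum>v\<in>P ` ?K. Gw E (fam \<psi> e P v)) = 0" by (rule class_zero[OF st P PK k0 IH])
  have tot: "(\<Sum>v\<in>E. Gw E (fam \<psi> e P v)) = 0" by (rule star[OF st P PK])
  have split: "\<And>f. (\<Sum>v\<in>E. f v) = (\<Sum>v\<in>E - P ` ?K. f v) + (\<Sum>v\<in>P ` ?K. f v)"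
    using sum.subset_diff[OF PK sd(1)] by simp
  have rest: "(\<Sum>v\<in>E - P ` ?K. Gw E (fam \<psi> e P v)) = 0" using split[of "\<lambda>v. Gw E (fam \<psi> e P v)"] cz tot by simp
  have "(\<Sum>v\<in>E. Wt j E (fam \<psi> e P v)) = (\<Sum>v\<in>E - P ` ?K. Wt j E (fam \<psi> e P v)) + (\<Sum>v\<in>P ` ?K. Wt j E (fam \<psi> e P v))"
    by (rule split)
  also have "(\<Sum>v\<in>P ` ?K. Wt j E (fam \<psi> e P v)) = (\<Sum>v\<in>P ` ?K. Gw E (fam \<psi> e P v) * ?B ?r)"
  proof (rule sum.cong[OF refl])
    fix v assume v: "v \<in> P ` ?K"
    then have "v \<in> E" using PK by blast
    then show "Wt j E (fam \<psi> e P v) = Gw E (fam \<psi> e P v) * ?B ?r"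
      unfolding Wt_def using rank_fam[OF st P PK] v by simp
  qed
  also have "\<dots> = 0" using cz by (simp add: sum_distrib_right[symmetric])
  also have "(\<Sum>v\<in>E - P ` ?K. Wt j E (fam \<psi> e P v)) = (\<Sum>v\<in>E - P ` ?K. Gw E (fam \<psi> e P v) * ?B (Suc ?r))"
  proof (rule sum.cong[OF refl])
    fix v assume v: "v \<in> E - P ` ?K"
    then show "Wt j E (fam \<psi> e P v) = Gw E (fam \<psi> e P v) * ?B (Suc ?r)"
      unfolding Wt_def using rank_fam[OF st P PK, of v] by simp
  qed
  also have "\<dots> = 0" using rest by (simp add: sum_distrib_right[symmetric])
  finally show ?thesis by simp
qed

lemma caseA_weighted:
  fixes E :: "(nat \<Rightarrow> 'a::{field,finite}) set"
  assumes st: "setting E \<psi> e" and opP: "opE {w\<in>E. \<psi> w = 0} P"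
  shows "(\<Sum>v\<in>E. Wt j E (fam \<psi> e P v)) = int (card (UNIV::'a set)) ^ j * Wt j {w\<in>E. \<psi> w = 0} P"
proof -
  let ?K = "{w\<in>E. \<psi> w = 0}"
  let ?q = "int (card (UNIV::'a set))"
  note sd = settingD[OF st]
  have Ksub: "vs.subspace ?K" using K_sub[OF st] .
  have finK: "finite ?K" using sd(1) by simp
  have P: "lin_on ?K P" using opE_lin[OF opP] .
  have PK: "P ` ?K \<subseteq> E" using opE_img[OF opP] by blast
  have PKK: "P ` ?K \<subseteq> ?K" using opE_img[OF opP] .
  let ?B = "BB ?q j (vs.dim E)"
  let ?r = "vs.dim (P ` ?K)"
  have decomp: "(\<Sum>v\<in>E. Wt j E (fam \<psi> e P v)) = (\<Sum>u\<in>?K. \<Sum>c\<in>(UNIV::'a set). Wt j E (fam \<psi> e P (u + scl c e)))"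
    by (rule sum_decomp[OF sd(2,3,4,5,1)])
  have vE: "\<And>u c. u \<in> ?K \<Longrightarrow> u + scl c e \<in> E" using subspD[OF sd(2)] sd(4) by blast
  have pv: "\<And>u c. u \<in> ?K \<Longrightarrow> \<psi> (u + scl c e) = c"
    using lfun_add[OF sd(3)] lfun_scl[OF sd(3) sd(4)] subspD(3)[OF sd(2) sd(4)] sd(5) by simp
  have rk: "\<And>v. v \<in> E \<Longrightarrow> vs.dim (fam \<psi> e P v ` E) = (if v \<in> P ` ?K then ?r else Suc ?r)"
    using rank_fam[OF st P PK] by blast
  show ?thesis
  proof (cases "si ?K P")
    case False
    have "\<And>u c. u \<in> ?K \<Longrightarrow> Wt j E (fam \<psi> e P (u + scl c e)) = 0"
    proof -
      fix u c assume u: "u \<in> ?K"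
      have "\<not> si E (fam \<psi> e P (u + scl c e))" using A_si_K[OF st opP vE[OF u]] False by blast
      then show "Wt j E (fam \<psi> e P (u + scl c e)) = 0" by (simp add: Wt_def Gw_def)
    qed
    then have "(\<Sum>u\<in>?K. \<Sum>c\<in>(UNIV::'a set). Wt j E (fam \<psi> e P (u + scl c e))) = 0" by simp
    moreover have "Wt j ?K P = 0" using False by (simp add: Wt_def Gw_def)
    ultimately show ?thesis unfolding decomp by simp
  next
    case True
    define s where "s = vs.dim (Fix ?K P)"
    define IP where "IP = (\<lambda>k. k - P k) ` ?K"
    have IPK: "IP \<subseteq> ?K" unfolding IP_def using opE_in[OF opP] subspD(4)[OF Ksub] by blast
    have finFix: "finite (Fix ?K P)" using sd(1) by (simp add: Fix_def)
    have subFix: "vs.subspace (Fix ?K P)" using Fix_sub[OF Ksub opP] .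
    have cardFix: "card (Fix ?K P) = card (UNIV::'a set) ^ s"
      unfolding s_def by (rule card_dim[OF finFix subFix])
    have inner: "\<And>u. u \<in> ?K \<Longrightarrow> (\<Sum>c\<in>(UNIV::'a set). Wt j E (fam \<psi> e P (u + scl c e)))
        = mu ?q s * ?B (if u \<in> P ` ?K then ?r else Suc ?r) + (if u \<in> IP then mu ?q (Suc s) * ?B (Suc ?r) else 0)"
    proof -
      fix u assume u: "u \<in> ?K"
      have "(\<Sum>c\<in>(UNIV::'a set). Wt j E (fam \<psi> e P (u + scl c e)))
         = Wt j E (fam \<psi> e P (u + scl 0 e)) + Wt j E (fam \<psi> e P (u + scl 1 e))"
      proof (rule sum_01)
        fix c :: 'a assume "c \<noteq> 0" "c \<noteq> 1"
        then show "Wt j E (fam \<psi> e P (u + scl c e)) = 0"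
          using A_other[OF st opP vE[OF u]] pv[OF u] unfolding Wt_def Gw_def by simp
      qed
      also have "Wt j E (fam \<psi> e P (u + scl 0 e)) = mu ?q s * ?B (if u \<in> P ` ?K then ?r else Suc ?r)"
      proof -
        have uE: "u \<in> E" "\<psi> u = 0" using u by auto
        have "si E (fam \<psi> e P u)" "Fix E (fam \<psi> e P u) = Fix ?K P"
          using A_c0[OF st opP uE(1) uE(2) True] by auto
        then show ?thesis unfolding Wt_def Gw_def s_def using rk[OF uE(1)] by simp
      qed
      also have "Wt j E (fam \<psi> e P (u + scl 1 e)) = (if u \<in> IP then mu ?q (Suc s) * ?B (Suc ?r) else 0)"
      proof -
        have p1: "\<psi> (u + e) = 1" using pv[OF u, of 1] by simp
        have ue: "u + e \<in> E" using vE[OF u, of 1] by simp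
        have nPK: "u + e \<notin> P ` ?K" using PKK p1 by auto
        show ?thesis
        proof (cases "u \<in> IP")
          case True': True
          then obtain k' where k': "k' \<in> ?K" "u = k' - P k'" unfolding IP_def by blast
          have d: "u + e - e = k' - P k'" using k' by simp
          note g = A_c1_good[OF st opP ue p1 k'(1) d True]
          have "card (Fix E (fam \<psi> e P (u + e))) = card (UNIV::'a set) ^ Suc s"
            using g(2) cardFix by simp
          moreover have "finite (Fix E (fam \<psi> e P (u + e)))" using sd(1) by (simp add: Fix_def)
          moreover have "vs.subspace (Fix E (fam \<psi> e P (u + e)))"
            using Fix_sub[OF sd(2) A_opS[OF st opP ue]] .
          ultimately have "vs.dim (Fix E (fam \<psi> e P (u + e))) = Suc s" using dim_eqI by blast
          then show ?thesis using g(1) True' rk[OF ue] nPK unfolding Wt_def Gw_def by simp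
        next
          case False
          have "u + e - e \<notin> (\<lambda>k. k - P k) ` ?K" using False unfolding IP_def by simp
          then have "\<not> si E (fam \<psi> e P (u + e))" using A_c1_bad[OF st opP ue p1] by blast
          then show ?thesis using False unfolding Wt_def Gw_def by simp
        qed
      qed
      finally show "(\<Sum>c\<in>(UNIV::'a set). Wt j E (fam \<psi> e P (u + scl c e)))
        = mu ?q s * ?B (if u \<in> P ` ?K then ?r else Suc ?r) + (if u \<in> IP then mu ?q (Suc s) * ?B (Suc ?r) else 0)" .
    qed
    have s1: "(\<Sum>u\<in>?K. mu ?q s * ?B (if u \<in> P ` ?K then ?r else Suc ?r))
        = mu ?q s * (int (card (P ` ?K)) * ?B ?r + int (card (?K - P ` ?K)) * ?B (Suc ?r))"
    proof -
      have "(\<Sum>u\<in>?K. mu ?q s * ?B (if u \<in> P ` ?K then ?r else Suc ?r))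
          = (\<Sum>u\<in>?K - P ` ?K. mu ?q s * ?B (if u \<in> P ` ?K then ?r else Suc ?r))
            + (\<Sum>u\<in>P ` ?K. mu ?q s * ?B (if u \<in> P ` ?K then ?r else Suc ?r))"
        by (rule sum.subset_diff[OF PKK finK])
      also have "(\<Sum>u\<in>?K - P ` ?K. mu ?q s * ?B (if u \<in> P ` ?K then ?r else Suc ?r))
          = (\<Sum>u\<in>?K - P ` ?K. mu ?q s * ?B (Suc ?r))" by (rule sum.cong) auto
      also have "(\<Sum>u\<in>P ` ?K. mu ?q s * ?B (if u \<in> P ` ?K then ?r else Suc ?r))
          = (\<Sum>u\<in>P ` ?K. mu ?q s * ?B ?r)" by (rule sum.cong) auto
      finally show ?thesis by (simp add: algebra_simps)
    qed
    have s2: "(\<Sum>u\<in>?K. if u \<in> IP then mu ?q (Suc s) * ?B (Suc ?r) else 0) = int (card IP) * (mu ?q (Suc s) * ?B (Suc ?r))"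
    proof -
      have "(\<Sum>u\<in>?K. if u \<in> IP then mu ?q (Suc s) * ?B (Suc ?r) else 0) = (\<Sum>u\<in>?K \<inter> IP. mu ?q (Suc s) * ?B (Suc ?r))"
        using sum.inter_restrict[OF finK, of "\<lambda>_. mu ?q (Suc s) * ?B (Suc ?r)" IP] by simp
      also have "?K \<inter> IP = IP" using IPK by blast
      finally show ?thesis by simp
    qed
    have cK: "card ?K = card (Fix ?K P) * card IP"
    proof -
      have "card ?K = card {k\<in>?K. k - P k = 0} * card IP"
        unfolding IP_def by (rule rank_nullity_card[OF Ksub IP_lin[OF Ksub opP] finK])
      moreover have "{k\<in>?K. k - P k = 0} = Fix ?K P" by (auto simp: Fix_def)
      ultimately show ?thesis by simp
    qed
    have finPK: "finite (P ` ?K)" using finK by simp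
    have subPK: "vs.subspace (P ` ?K)" using lin_sub_image[OF Ksub P] .
    have cPK: "card (P ` ?K) = card (UNIV::'a set) ^ ?r" using card_dim[OF finPK subPK] .
    have cKd: "card ?K = card (UNIV::'a set) ^ vs.dim ?K" using card_dim[OF finK Ksub] .
    have cdiff: "int (card (?K - P ` ?K)) = int (card ?K) - int (card (P ` ?K))"
      using card_Diff_subset[OF finPK PKK] card_mono[OF finK PKK] by simp
    have rle: "?r \<le> vs.dim ?K"
    proof -
      have "card (UNIV::'a set) ^ ?r \<le> card (UNIV::'a set) ^ vs.dim ?K"
        using card_mono[OF finK PKK] cPK cKd by simp
      then show ?thesis using q_ge2[where 'a='a] by (simp add: power_le_imp_le_exp)
    qed
    have dE: "vs.dim E = Suc (vs.dim ?K)" using dim_E_K[OF st] .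
    have "(\<Sum>v\<in>E. Wt j E (fam \<psi> e P v))
        = (\<Sum>u\<in>?K. mu ?q s * ?B (if u \<in> P ` ?K then ?r else Suc ?r) + (if u \<in> IP then mu ?q (Suc s) * ?B (Suc ?r) else 0))"
      unfolding decomp using inner by (rule sum.cong[OF refl])
    also have "\<dots> = mu ?q s * (int (card (P ` ?K)) * ?B ?r + int (card (?K - P ` ?K)) * ?B (Suc ?r))
         + int (card IP) * (mu ?q (Suc s) * ?B (Suc ?r))"
      by (simp only: sum.distrib s1 s2)
    also have "\<dots> = mu ?q s * (?q ^ ?r * (?B ?r - ?B (Suc ?r)))"
      unfolding cdiff mu_Suc using cK cardFix cPK by (simp add: algebra_simps)
    also have "?q ^ ?r * (?B ?r - ?B (Suc ?r)) = ?q ^ j * BB ?q j (vs.dim ?K) ?r"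
      unfolding dE by (rule qb_step[OF rle])
    finally show ?thesis using True unfolding Wt_def Gw_def s_def by simp
  qed
qed

definition uvec :: "nat \<Rightarrow> nat \<Rightarrow> 'a::field" where
  "uvec m = (\<lambda>i. if i = m then 1 else 0)"

lemma V_sub: "vs.subspace (V m :: (nat \<Rightarrow> 'a::field) set)"
  unfolding vs.subspace_def V_def by (auto simp: scl_def)

lemma V_mono: "r \<le> m \<Longrightarrow> V r \<subseteq> V m"
  unfolding V_def by auto

lemma V_Suc: "V (Suc m) = ext1 (V m) (uvec m :: nat \<Rightarrow> 'a::field)"
proof
  show "V (Suc m) \<subseteq> ext1 (V m) (uvec m :: nat \<Rightarrow> 'a)"
  proof
    fix x :: "nat \<Rightarrow> 'a::field" assume x: "x \<in> V (Suc m)"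
    have "x - scl (x m) (uvec m) \<in> V m" using x unfolding V_def uvec_def by (auto simp: scl_def)
    then show "x \<in> ext1 (V m) (uvec m)" unfolding ext1_def by blast
  qed
  show "ext1 (V m) (uvec m :: nat \<Rightarrow> 'a) \<subseteq> V (Suc m)"
  proof
    fix x :: "nat \<Rightarrow> 'a::field" assume "x \<in> ext1 (V m) (uvec m)"
    then obtain c where c: "x - scl c (uvec m) \<in> V m" unfolding ext1_def by blast
    show "x \<in> V (Suc m)" unfolding V_def
    proof (intro CollectI allI impI)
      fix i assume "Suc m \<le> i"
      then have "(x - scl c (uvec m)) i = 0" "i \<noteq> m" using c unfolding V_def by auto
      then show "x i = 0" unfolding uvec_def by (simp add: scl_def)
    qed
  qed
qed

lemma finite_ext1:
  assumes "finite (W :: (nat \<Rightarrow> 'a::{field,finite}) set)"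
  shows "finite (ext1 W a)"
proof -
  have "ext1 W a \<subseteq> (\<lambda>(c,w). w + scl c a) ` ((UNIV::'a set) \<times> W)"
  proof
    fix x assume "x \<in> ext1 W a"
    then obtain c where "x - scl c a \<in> W" unfolding ext1_def by blast
    then show "x \<in> (\<lambda>(c,w). w + scl c a) ` ((UNIV::'a set) \<times> W)"
      by (intro image_eqI[of _ _ "(c, x - scl c a)"]) auto
  qed
  moreover have "finite ((UNIV::'a set) \<times> W)" using assms by simp
  ultimately show ?thesis using finite_subset by blast
qed

lemma V_fin_card: "finite (V m :: (nat \<Rightarrow> 'a::{field,finite}) set) \<and> card (V m :: (nat \<Rightarrow> 'a) set) = card (UNIV::'a set) ^ m"
proof (induction m)
  case 0
  have "V 0 = {0 :: nat \<Rightarrow> 'a}" unfolding V_def by (auto simp: fun_eq_iff)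
  then show ?case by simp
next
  case (Suc m)
  have nu: "(uvec m :: nat \<Rightarrow> 'a) \<notin> V m" unfolding V_def uvec_def by auto
  have fin: "finite (V m :: (nat \<Rightarrow> 'a) set)" and cd: "card (V m :: (nat \<Rightarrow> 'a) set) = card (UNIV::'a set) ^ m"
    using Suc by auto
  have "finite (ext1 (V m) (uvec m :: nat \<Rightarrow> 'a))" by (rule finite_ext1[OF fin])
  moreover have "card (ext1 (V m) (uvec m :: nat \<Rightarrow> 'a)) = card (UNIV::'a set) ^ Suc m"
    using card_ext1[OF fin V_sub nu] cd by simp
  ultimately show ?case unfolding V_Suc by simp
qed

lemma V_fin: "finite (V m :: (nat \<Rightarrow> 'a::{field,finite}) set)" using V_fin_card by blast

lemma V_dim: "vs.dim (V m :: (nat \<Rightarrow> 'a::{field,finite}) set) = m"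
  using dim_eqI[OF V_fin V_sub] V_fin_card by blast

lemma pdom_ops: "S ` V m \<subseteq> V m \<Longrightarrow> pdom (V m) (V m) S k = V m"
proof (induction k)
  case 0 then show ?case by simp
next
  case (Suc k)
  then show ?case using funpow_in[OF Suc.prems] by auto
qed

lemma semi_idem_si:
  assumes "S ` V m \<subseteq> V m"
  shows "semi_idem (V m) (V m) S \<longleftrightarrow> si (V m) S"
proof -
  have "(\<forall>w \<in> (S ^^ N) ` V m. w \<in> V m \<and> S w = w) \<longleftrightarrow> (\<forall>w\<in>V m. (S ^^ Suc N) w = (S ^^ N) w)" for N
    using funpow_in[OF assms] by auto
  then show ?thesis unfolding semi_idem_def si_def pdom_ops[OF assms] by simp
qed

lemma srk_si:
  assumes SE: "S ` E \<subseteq> E" and si: "si E S"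
  shows "srk E S = vs.dim (Fix E S)"
proof -
  obtain N where N: "\<forall>w\<in>E. (S ^^ Suc N) w = (S ^^ N) w" using si unfolding si_def by blast
  have rk: "\<And>i. N \<le> i \<Longrightarrow> rk E (S ^^ i) = vs.dim (Fix E S)"
    unfolding rk_def using si_image_Fix[OF N SE] by simp
  show ?thesis unfolding srk_def
  proof (rule the_equality)
    show "\<exists>N. \<forall>i\<ge>N. rk E (S ^^ i) = vs.dim (Fix E S)" using rk by blast
  next
    fix r assume "\<exists>N'. \<forall>i\<ge>N'. rk E (S ^^ i) = r"
    then obtain N' where "\<forall>i\<ge>N'. rk E (S ^^ i) = r" by blast
    then have "rk E (S ^^ max N N') = r" by simp
    moreover have "rk E (S ^^ max N N') = vs.dim (Fix E S)" using rk by simp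
    ultimately show "r = vs.dim (Fix E S)" by simp
  qed
qed

lemma Wt_cong:
  assumes "S ` E \<subseteq> E" "\<And>w. w \<in> E \<Longrightarrow> S w = S' w"
  shows "Wt j E S = Wt j E S'"
proof -
  have "S ` E = S' ` E" using assms(2) by (auto intro: image_cong)
  then show ?thesis unfolding Wt_def using Gw_cong[OF assms] by simp
qed

definition FF :: "nat \<Rightarrow> nat \<Rightarrow> ((nat \<Rightarrow> 'a::{field,finite}) \<Rightarrow> (nat \<Rightarrow> 'a)) \<Rightarrow> nat \<Rightarrow> int" where
  "FF j r T m = (\<Sum>S\<in>{S\<in>ops m. \<forall>v\<in>V r. S v = T v}. Wt j (V m) S)"

lemma ops_fin: "finite (ops m :: ((nat \<Rightarrow> 'a::{field,finite}) \<Rightarrow> (nat \<Rightarrow> 'a)) set)"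
proof -
  have "ops m \<subseteq> (V m \<rightarrow>\<^sub>E (V m :: (nat \<Rightarrow> 'a) set))"
    unfolding ops_def by (auto simp: PiE_def Pi_def)
  moreover have "finite ((V m :: (nat \<Rightarrow> 'a) set) \<rightarrow>\<^sub>E (V m :: (nat \<Rightarrow> 'a) set))" by (intro finite_PiE V_fin)
  ultimately show ?thesis using finite_subset by blast
qed

lemma h_FF: "h n r l j T = int (card (UNIV::'a set)) ^ (l * j) * FF j r (T :: (nat \<Rightarrow> 'a::{field,finite}) \<Rightarrow> (nat \<Rightarrow> 'a)) (n - l)"
proof -
  let ?m = "n - l"
  let ?q = "int (card (UNIV::'a set))"
  let ?B = "{S\<in>ops ?m. \<forall>v\<in>V r. S v = T v}"
  let ?c = "\<lambda>S. semi_idem (V ?m) (V ?m) S \<and> rk (V ?m) S \<le> j"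
  let ?f = "\<lambda>S. mu ?q (srk (V ?m) S) * qbinom ?q (?m - rk (V ?m) S) (j - rk (V ?m) S)"
  have finB: "finite ?B" by (rule finite_subset[OF _ ops_fin]) auto
  have setEq: "{S \<in> ops ?m. semi_idem (V ?m) (V ?m) S \<and> rk (V ?m) S \<le> j \<and> (\<forall>v \<in> V r. S v = T v)}
      = {S\<in>?B. ?c S}" by auto
  have "(\<Sum>S\<in>{S\<in>?B. ?c S}. ?f S) = (\<Sum>S\<in>?B. if ?c S then ?f S else 0)"
    by (rule sum.inter_filter[OF finB])
  also have "\<dots> = (\<Sum>S\<in>?B. Wt j (V ?m) S)"
  proof (rule sum.cong[OF refl])
    fix S assume "S \<in> ?B"
    then have SE: "S ` V ?m \<subseteq> V ?m" unfolding ops_def by auto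
    show "(if ?c S then ?f S else 0) = Wt j (V ?m) S"
      unfolding Wt_def Gw_def BB_def V_dim semi_idem_si[OF SE] rk_def[symmetric]
      using srk_si[OF SE] by auto
  qed
  finally show ?thesis unfolding h_def Let_def FF_def setEq by simp
qed

lemma lfun_coord: "lfun E (\<lambda>w. w k)"
  unfolding lfun_def by (simp add: scl_def)

lemma K_V: "{w \<in> V (Suc k). w k = 0} = (V k :: (nat \<Rightarrow> 'a::zero) set)"
  unfolding V_def by (auto simp: le_Suc_eq) (metis le_antisym not_less_eq_eq)

lemma FF_step:
  assumes rk: "r \<le> k"
  shows "FF j r (T :: (nat \<Rightarrow> 'a::{field,finite}) \<Rightarrow> (nat \<Rightarrow> 'a)) (Suc k) = int (card (UNIV::'a set)) ^ j * FF j r T k"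
proof -
  let ?E = "V (Suc k) :: (nat \<Rightarrow> 'a) set"
  let ?K = "V k :: (nat \<Rightarrow> 'a) set"
  let ?\<psi> = "\<lambda>w::nat \<Rightarrow> 'a. w k"
  let ?e = "uvec k :: nat \<Rightarrow> 'a"
  let ?q = "int (card (UNIV::'a set))"
  have st: "setting ?E ?\<psi> ?e" unfolding setting_def
    using V_fin V_sub lfun_coord by (auto simp: uvec_def V_def)
  have KV: "{w\<in>?E. ?\<psi> w = 0} = ?K" by (rule K_V)
  have Esub: "vs.subspace ?E" by (rule V_sub)
  have Ksub: "vs.subspace ?K" by (rule V_sub)
  have KE: "?K \<subseteq> ?E" by (rule V_mono) simp
  have rK: "V r \<subseteq> ?K" using V_mono[OF rk] .
  let ?Pset = "{P. lin_on ?K P \<and> P ` ?K \<subseteq> ?E \<and> P \<in> extensional ?K \<and> (\<forall>v\<in>V r. P v = T v)}"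
  let ?B = "{S\<in>ops (Suc k). \<forall>v\<in>V r. S v = T v}"
  define \<Phi> where "\<Phi> = (\<lambda>(P, v). restrict (fam ?\<psi> ?e P v) ?E)"
  have finP: "finite ?Pset"
  proof -
    have "?Pset \<subseteq> (?K \<rightarrow>\<^sub>E ?E)" by (auto simp: PiE_def Pi_def)
    moreover have "finite (?K \<rightarrow>\<^sub>E ?E)" by (intro finite_PiE V_fin)
    ultimately show ?thesis using finite_subset by blast
  qed
  have bij: "bij_betw \<Phi> (?Pset \<times> ?E) ?B"
  proof (rule bij_betwI[where g = "\<lambda>S. (restrict S ?K, S ?e)"])
    show "\<Phi> \<in> ?Pset \<times> ?E \<rightarrow> ?B"
    proof
      fix x assume "x \<in> ?Pset \<times> ?E"
      then obtain P v where x: "x = (P, v)" and P: "P \<in> ?Pset" and v: "v \<in> ?E" by blast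
      have Plin: "lin_on {w\<in>?E. ?\<psi> w = 0} P" using P unfolding KV by simp
      have PK: "P ` {w\<in>?E. ?\<psi> w = 0} \<subseteq> ?E" using P unfolding KV by simp
      have op: "opE ?E (fam ?\<psi> ?e P v)" using fam_op[OF st Plin PK v] .
      have "restrict (fam ?\<psi> ?e P v) ?E \<in> ops (Suc k)"
        unfolding ops_def using op Esub subspD[OF Esub] unfolding opE_def lin_on_def by auto
      moreover have "\<forall>w\<in>V r. restrict (fam ?\<psi> ?e P v) ?E w = T w"
      proof
        fix w :: "nat \<Rightarrow> 'a" assume w: "w \<in> V r"
        then have "w \<in> ?K" "w \<in> ?E" using rK KE by auto
        then have "w k = 0" unfolding V_def by simp
        then show "restrict (fam ?\<psi> ?e P v) ?E w = T w" using fam_K[of ?\<psi> w] P w \<open>w \<in> ?E\<close> by simp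
      qed
      ultimately show "\<Phi> x \<in> ?B" unfolding x \<Phi>_def by simp
    qed
    show "(\<lambda>S. (restrict S ?K, S ?e)) \<in> ?B \<rightarrow> ?Pset \<times> ?E"
    proof
      fix S assume S: "S \<in> ?B"
      then have Sl: "lin_on ?E S" and SE: "S ` ?E \<subseteq> ?E" unfolding ops_def by auto
      have "lin_on ?K (restrict S ?K)"
        unfolding lin_on_def
      proof (intro conjI ballI allI)
        fix u w assume u: "u \<in> ?K" and w: "w \<in> ?K"
        then have "u \<in> ?E" "w \<in> ?E" using KE by auto
        then show "restrict S ?K (u + w) = restrict S ?K u + restrict S ?K w"
          using lin_add[OF Esub Sl] u w subspD(2)[OF Ksub u w] by simp
      next
        fix c w assume w: "w \<in> ?K"
        then have "w \<in> ?E" using KE by auto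
        then show "restrict S ?K (scl c w) = scl c (restrict S ?K w)"
          using lin_scl[OF Esub Sl] w subspD(3)[OF Ksub w] by simp
      qed
      moreover have "restrict S ?K ` ?K \<subseteq> ?E" using SE KE by auto
      moreover have "\<forall>v\<in>V r. restrict S ?K v = T v" using S rK by auto
      moreover have "S ?e \<in> ?E" using SE st unfolding setting_def by blast
      ultimately show "(restrict S ?K, S ?e) \<in> ?Pset \<times> ?E" by simp
    qed
  next
    fix x assume "x \<in> ?Pset \<times> ?E"
    then obtain P v where x: "x = (P, v)" and P: "P \<in> ?Pset" and v: "v \<in> ?E" by blast
    have Plin: "lin_on {w\<in>?E. ?\<psi> w = 0} P" using P unfolding KV by simp
    have "restrict (restrict (fam ?\<psi> ?e P v) ?E) ?K = P"
    proof
      fix w :: "nat \<Rightarrow> 'a"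
      show "restrict (restrict (fam ?\<psi> ?e P v) ?E) ?K w = P w"
      proof (cases "w \<in> ?K")
        case True
        then have "w \<in> ?E" "w k = 0" using KE unfolding V_def by auto
        then show ?thesis using True fam_K[of ?\<psi> w] by simp
      next
        case False
        then show ?thesis using P by (auto simp: extensional_def)
      qed
    qed
    moreover have "restrict (fam ?\<psi> ?e P v) ?E ?e = v"
      using fam_e[OF st Plin] st unfolding setting_def by simp
    ultimately show "(\<lambda>S. (restrict S ?K, S ?e)) (\<Phi> x) = x" unfolding x \<Phi>_def by simp
  next
    fix S assume S: "S \<in> ?B"
    then have Sl: "lin_on ?E S" and SE: "S ` ?E \<subseteq> ?E" and Sx: "S \<in> extensional ?E" unfolding ops_def by auto
    have eE: "?e \<in> ?E" using st unfolding setting_def by blast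
    have "restrict (fam ?\<psi> ?e (restrict S ?K) (S ?e)) ?E = S"
    proof
      fix w :: "nat \<Rightarrow> 'a"
      show "restrict (fam ?\<psi> ?e (restrict S ?K) (S ?e)) ?E w = S w"
      proof (cases "w \<in> ?E")
        case True
        have d: "w - scl (w k) ?e \<in> ?K" using fam_decomp[OF st True] unfolding KV .
        have "S (w - scl (w k) ?e) = S w - scl (w k) (S ?e)"
          using lin_diff[OF Esub Sl True subspD(3)[OF Esub eE]] lin_scl[OF Esub Sl eE] by simp
        then show ?thesis using True d unfolding fam_def by simp
      next
        case False
        then show ?thesis using Sx by (auto simp: extensional_def)
      qed
    qed
    then show "\<Phi> (restrict S ?K, S ?e) = S" unfolding \<Phi>_def by simp
  qed
  have "FF j r T (Suc k) = (\<Sum>x\<in>?Pset \<times> ?E. Wt j ?E (\<Phi> x))"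
    unfolding FF_def using sum.reindex_bij_betw[OF bij, of "Wt j ?E"] by simp
  also have "\<dots> = (\<Sum>P\<in>?Pset. \<Sum>v\<in>?E. Wt j ?E (\<Phi> (P, v)))"
    by (simp add: sum.cartesian_product)
  also have "\<dots> = (\<Sum>P\<in>?Pset. if P ` ?K \<subseteq> ?K then ?q ^ j * Wt j ?K P else 0)"
  proof (rule sum.cong[OF refl])
    fix P assume P: "P \<in> ?Pset"
    have Plin: "lin_on {w\<in>?E. ?\<psi> w = 0} P" using P unfolding KV by simp
    have PK: "P ` {w\<in>?E. ?\<psi> w = 0} \<subseteq> ?E" using P unfolding KV by simp
    have "(\<Sum>v\<in>?E. Wt j ?E (\<Phi> (P, v))) = (\<Sum>v\<in>?E. Wt j ?E (fam ?\<psi> ?e P v))"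
    proof (rule sum.cong[OF refl])
      fix v assume v: "v \<in> ?E"
      have op: "opE ?E (fam ?\<psi> ?e P v)" using fam_op[OF st Plin PK v] .
      show "Wt j ?E (\<Phi> (P, v)) = Wt j ?E (fam ?\<psi> ?e P v)" unfolding \<Phi>_def
        by (rule Wt_cong) (use opE_img[OF op] in auto)
    qed
    also have "\<dots> = (if P ` ?K \<subseteq> ?K then ?q ^ j * Wt j ?K P else 0)"
    proof (cases "P ` ?K \<subseteq> ?K")
      case True
      have "opE {w\<in>?E. ?\<psi> w = 0} P" unfolding KV opE_def using P True by simp
      then show ?thesis using caseA_weighted[OF st, of P j] True unfolding KV by simp
    next
      case False
      then obtain k0 where k0: "k0 \<in> ?K" "P k0 \<notin> ?K" by blast
      have "P k0 \<in> ?E" using P k0(1) by blast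
      then have "P k0 k \<noteq> 0" using k0(2) K_V[of k] by blast
      moreover have "k0 \<in> ?E" "k0 k = 0" using k0(1) KE unfolding V_def by auto
      ultimately show ?thesis using caseB_weighted[OF st Plin PK, of k0 j] False by simp
    qed
    finally show "(\<Sum>v\<in>?E. Wt j ?E (\<Phi> (P, v))) = (if P ` ?K \<subseteq> ?K then ?q ^ j * Wt j ?K P else 0)" .
  qed
  also have "\<dots> = (\<Sum>P\<in>{P\<in>?Pset. P ` ?K \<subseteq> ?K}. ?q ^ j * Wt j ?K P)"
    by (rule sum.inter_filter[OF finP, symmetric])
  also have "{P\<in>?Pset. P ` ?K \<subseteq> ?K} = {S\<in>ops k. \<forall>v\<in>V r. S v = T v}"
    unfolding ops_def using KE by auto
  finally show ?thesis unfolding FF_def by (simp add: sum_distrib_left)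
qed

lemma h_step:
  assumes "Suc l \<le> n - r"
  shows "h n r (Suc l) j (T :: (nat \<Rightarrow> 'a::{field,finite}) \<Rightarrow> (nat \<Rightarrow> 'a)) = h n r l j T"
proof -
  let ?q = "int (card (UNIV::'a set))"
  define k where "k = n - Suc l"
  have k: "n - l = Suc k" "r \<le> k" "n - Suc l = k" using assms unfolding k_def by arith+
  have "h n r l j T = ?q ^ (l * j) * FF j r T (Suc k)" using h_FF[of n r l j T] k(1) by simp
  also have "\<dots> = ?q ^ (l * j) * (?q ^ j * FF j r T k)" using FF_step[OF k(2)] by simp
  also have "\<dots> = ?q ^ (Suc l * j) * FF j r T k" by (simp add: power_add mult.assoc)
  also have "\<dots> = h n r (Suc l) j T" using h_FF[of n r "Suc l" j T] k(3) by simp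
  finally show ?thesis by simp
qed

lemma h_const:
  assumes "l \<le> n - r"
  shows "h n r l j (T :: (nat \<Rightarrow> 'a::{field,finite}) \<Rightarrow> (nat \<Rightarrow> 'a)) = h n r 0 j T"
  using assms
proof (induction l)
  case 0 then show ?case by simp
next
  case (Suc l)
  have "h n r (Suc l) j T = h n r l j T" by (rule h_step[OF Suc.prems])
  also have "\<dots> = h n r 0 j T" using Suc by simp
  finally show ?case .
qed

theorem proposition3p6:
  fixes T :: "(nat \<Rightarrow> 'a::{field,finite}) \<Rightarrow> (nat \<Rightarrow> 'a)"
    and n r j l1 l2 :: nat
  assumes "r \<le> n"
    and "lin_on (V r) T" and "T ` V r \<subseteq> V n"
    and "semi_idem (V n) (V r) T"
    and "j \<le> r" and "l1 \<le> n - r" and "l2 \<le> n - r"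
  shows "h n r l1 j T = h n r l2 j T"
proof -
  have a: "h n r l1 j T = h n r 0 j T" by (rule h_const[OF assms(6)])
  have b: "h n r l2 j T = h n r 0 j T" by (rule h_const[OF assms(7)])
  show ?thesis using a b by simp
qed

end
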